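(* Let $d\ge 3$, $m=d$, $\lambda>0$, and let $w_\star,v\in\mathbb{S}^{d-1}$ with $v^\top w_\star=0$. Set $Q=I_d+\lambda vv^\top$ and $P_\perp=I_d-w_\star w_\star^\top-vv^\top$, and let \[ \mathcal M=\{a\,w_\star w_\star^\top+b\,vv^\top+c\,P_\perp:\ a,b,c\in\mathbb{R}^+\}. \] Consider the population loss $\mathcal L(W)=\mathbb{E}\big(y-\sum_{j=1}^m (w_j^\top x)^2\big)^2$ for $W=(w_1,\dots,w_m)\in\mathbb{R}^{d\times m}$, where $x\sim\mathcal N(0,Q)$, $y=(x^\top w_\star)^2+\nu$, $\nu\sim\mathcal N(0,\sigma^2)$ independent of $x$. Let $\eta,\tilde\eta>0$ and consider the spectral gradient descent iterates $W_{k+1}=W_k-\eta\,\mathrm{polar}(\nabla_W\mathcal L(W_k))$ and the gradient descent iterates $\tilde W_{k+1}=\tilde W_k-\tilde\eta\,\nabla_W\mathcal L(\tilde W_k)$, with $M_k:=W_kW_k^\top$ and $\tilde M_k:=\tilde W_k\tilde W_k^\top$. If $M_0\in\mathcal M$ (resp. $\tilde M_0\in\mathcal M$), then $M_k\in\mathcal M$ (resp. $\tilde M_k\in\mathcal M$) for all $k\ge 0$.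
   Context: For a matrix $A$, $\mathrm{polar}(A):=A(A^\top A)^{-1/2}$, where $(\cdot)^{-1/2}$ is understood in the Moore–Penrose sense (so $\mathrm{polar}$ replaces nonzero singular values by $1$ and keeps singular vectors). *)

theory Defs
  imports "HOL-Probability.Probability"
begin

type_synonym 'n mat = "real ^ 'n ^ 'n"

definition outer :: "real ^ 'n \<Rightarrow> real ^ 'n \<Rightarrow> 'n mat" where
  "outer u v = (\<chi> i j. u $ i * v $ j)"

definition psd :: "'n::finite mat \<Rightarrow> bool" where
  "psd S \<longleftrightarrow> transpose S = S \<and> (\<forall>x. 0 \<le> x \<bullet> (S *v x))"

definition psd_sqrt :: "'n::finite mat \<Rightarrow> 'n mat" where
  "psd_sqrt S = (THE R. psd R \<and> R ** R = S)"

definition pinv :: "'n::finite mat \<Rightarrow> 'n mat" where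
  "pinv S = (THE X. S ** X ** S = S \<and> X ** S ** X = X \<and>
                    transpose (S ** X) = S ** X \<and> transpose (X ** S) = X ** S)"

definition polar :: "'n::finite mat \<Rightarrow> 'n mat" where
  "polar A = A ** pinv (psd_sqrt (transpose A ** A))"

text \<open>Euclidean gradient (w.r.t. the Frobenius inner product) of a real function of a matrix.\<close>
definition grad :: "('n::finite mat \<Rightarrow> real) \<Rightarrow> 'n mat \<Rightarrow> 'n mat" where
  "grad f W = (THE G. GDERIV f W :> G)"

definition gauss_density :: "'n::finite mat \<Rightarrow> real ^ 'n \<Rightarrow> real" where
  "gauss_density Q x =
     (2 * pi) powr (- real CARD('n) / 2) / sqrt (det Q) * exp (- (x \<bullet> (matrix_inv Q *v x)) / 2)"

text \<open>Joint law of (x, z): x ~ N(0,Q) independent of z ~ N(0,1); the noise is nu = sigma z.\<close>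
definition data_measure :: "'n::finite mat \<Rightarrow> ((real ^ 'n) \<times> real) measure" where
  "data_measure Q = density lborel (gauss_density Q) \<Otimes>\<^sub>M density lborel std_normal_density"

definition pop_loss :: "'n::finite mat \<Rightarrow> real ^ 'n \<Rightarrow> real \<Rightarrow> 'n mat \<Rightarrow> real" where
  "pop_loss Q wstar \<sigma> W =
     (\<integral>xz. (((fst xz \<bullet> wstar)\<^sup>2 + \<sigma> * snd xz)
              - (\<Sum>j\<in>UNIV. (column j W \<bullet> fst xz)\<^sup>2))\<^sup>2 \<partial>data_measure Q)"

definition inv_family :: "real ^ 'n \<Rightarrow> real ^ 'n \<Rightarrow> 'n::finite mat set" where
  "inv_family wstar v =
     {a *\<^sub>R outer wstar wstar + b *\<^sub>R outer v v
        + c *\<^sub>R (mat 1 - outer wstar wstar - outer v v) | a b c. a \<ge> 0 \<and> b \<ge> 0 \<and> c \<ge> 0}"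

end

theory Submission
  imports Defs
begin

definition refl :: "real^'n::finite \<Rightarrow> real^'n \<Rightarrow> real^'n" where
  "refl u x = x - (2 * (u \<bullet> x)) *\<^sub>R u"

lemma refl_linear: "linear (refl u)"
  unfolding refl_def by (intro linearI) (auto simp: algebra_simps inner_add_right)

lemma refl_invol: "norm u = 1 \<Longrightarrow> refl u (refl u x) = x"
  unfolding refl_def
  by (simp add: algebra_simps inner_diff_right inner_commute dot_square_norm)

lemma refl_norm: "norm u = 1 \<Longrightarrow> norm (refl u x) = norm x"
proof -
  assume u: "norm u = 1"
  have uu: "u \<bullet> u = 1" using u by (simp add: power2_norm_eq_inner[symmetric])
  have "refl u x \<bullet> refl u x = x \<bullet> x"
    unfolding refl_def
    by (simp add: algebra_simps inner_diff_right inner_diff_left inner_commute uu)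
  then show ?thesis by (simp add: norm_eq_sqrt_inner)
qed

lemma refl_orth: "norm u = 1 \<Longrightarrow> orthogonal_transformation (refl u)"
  unfolding orthogonal_transformation using refl_linear refl_norm by blast

lemma refl_vimage: "norm u = 1 \<Longrightarrow> refl u -` S = refl u ` S"
  using refl_invol by (auto simp: image_iff) (metis)

lemma refl_cont[measurable]: "refl u \<in> borel_measurable borel"
  unfolding refl_def by measurable

lemma lborel_refl_wo:
  fixes u :: "real^'n::{finite,wellorder}"
  assumes u: "norm u = 1"
  shows "distr lborel borel (refl u) = lborel"
proof (rule lborel_eqI[symmetric])
  show "sets (distr lborel borel (refl u)) = sets borel" by simp
  fix l r :: "real^'n::{finite,wellorder}" assume "\<And>b. b \<in> Basis \<Longrightarrow> l \<bullet> b \<le> r \<bullet> b"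
  have B: "refl u -` box l r \<in> sets borel"
    using measurable_sets[OF refl_cont, of "box l r" u] by simp
  have fm: "refl u ` box l r \<in> lmeasurable"
    using measurable_orthogonal_image[OF refl_orth[OF u] lmeasurable_box] .
  have "emeasure (distr lborel borel (refl u)) (box l r) = emeasure lborel (refl u ` box l r)"
    by (simp add: emeasure_distr refl_vimage[OF u, symmetric])
  also have "\<dots> = emeasure lebesgue (refl u ` box l r)"
    using B by (simp add: emeasure_completion refl_vimage[OF u])
  also have "\<dots> = measure lebesgue (refl u ` box l r)"
    using fm by (simp add: emeasure_eq_measure2)
  also have "\<dots> = measure lebesgue (box l r)"
    using measure_orthogonal_image[OF refl_orth[OF u] lmeasurable_box] by simp
  also have "\<dots> = emeasure lebesgue (box l r)"
    by (simp add: emeasure_eq_measure2)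
  also have "\<dots> = emeasure lborel (box l r)"
    by (simp add: emeasure_completion)
  finally show "emeasure (distr lborel borel (refl u)) (box l r) = (\<Prod>b\<in>Basis. (r - l) \<bullet> b)"
    using \<open>\<And>b. b \<in> Basis \<Longrightarrow> l \<bullet> b \<le> r \<bullet> b\<close> by (simp add: emeasure_lborel_box_eq)
qed

lemma Basis_cart_real: "(Basis::(real^'n::finite) set) = range (\<lambda>i. axis i 1)"
  by (auto simp: Basis_vec_def)

lemma prod_Basis_cart: "(\<Prod>b\<in>(Basis::(real^'n::finite) set). g b) = (\<Prod>i\<in>UNIV. g (axis i 1))"
proof -
  have "inj (\<lambda>i::'n. axis i (1::real))" by (auto simp: inj_on_def axis_eq_axis)
  then show ?thesis unfolding Basis_cart_real by (simp add: prod.reindex)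
qed

lemma sum_inj_zero:
  fixes f :: "'a::finite \<Rightarrow> 'b::finite" and g :: "'b \<Rightarrow> 'c::comm_monoid_add"
  assumes "inj f" "\<And>j. j \<notin> range f \<Longrightarrow> g j = 0"
  shows "(\<Sum>j\<in>UNIV. g j) = (\<Sum>i\<in>UNIV. g (f i))"
proof -
  have "(\<Sum>j\<in>UNIV. g j) = (\<Sum>j\<in>range f. g j)"
    using assms(2) by (intro sum.mono_neutral_right) auto
  also have "\<dots> = (\<Sum>i\<in>UNIV. g (f i))" using assms(1) by (simp add: sum.reindex)
  finally show ?thesis .
qed

lemma prod_inj_one:
  fixes f :: "'a::finite \<Rightarrow> 'b::finite" and g :: "'b \<Rightarrow> 'c::comm_monoid_mult"
  assumes "inj f" "\<And>j. j \<notin> range f \<Longrightarrow> g j = 1"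
  shows "(\<Prod>j\<in>UNIV. g j) = (\<Prod>i\<in>UNIV. g (f i))"
proof -
  have "(\<Prod>j\<in>UNIV. g j) = (\<Prod>j\<in>range f. g j)"
    using assms(2) by (intro prod.mono_neutral_right) auto
  also have "\<dots> = (\<Prod>i\<in>UNIV. g (f i))" using assms(1) by (simp add: prod.reindex)
  finally show ?thesis .
qed

lemma lborel_refl:
  fixes u :: "real^'d::finite"
  assumes u: "norm u = 1"
  shows "distr lborel borel (refl u) = lborel"
proof -
  have "card (UNIV::'d set) \<le> card (UNIV::'d bit0 set)" by simp
  then obtain f :: "'d \<Rightarrow> 'd bit0" where f: "inj f"
    using card_le_inj[of "UNIV::'d set" "UNIV::'d bit0 set"] by auto
  define \<pi> :: "real^'d bit0 \<Rightarrow> real^'d" where "\<pi> y = (\<chi> i. y $ f i)" for y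
  define K :: "(real^'d bit0) set" where "K = {y. \<forall>j\<in>-range f. 0 < y$j \<and> y$j < 1}"
  define M where "M = distr (density lborel (indicator K)) borel \<pi>"
  have lin\<pi>: "linear \<pi>" unfolding \<pi>_def by (intro linearI) (auto simp: vec_eq_iff)
  have m\<pi>[measurable]: "\<pi> \<in> borel_measurable borel"
  proof -
    have "bounded_linear \<pi>" using lin\<pi> linear_conv_bounded_linear by auto
    then show ?thesis by (intro borel_measurable_continuous_onI linear_continuous_on)
  qed
  have K[measurable]: "K \<in> sets borel" unfolding K_def by measurable
  have MK: "emeasure M B = emeasure lborel (K \<inter> \<pi> -` B)" if B: "B \<in> sets borel" for B
    unfolding M_def using B
    by (simp add: emeasure_distr emeasure_restricted measurable_sets[OF m\<pi>, of B, simplified])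
  have box1: "emeasure M (box l r) = (\<Prod>b\<in>Basis. (r - l) \<bullet> b)"
    if le: "\<And>b. b \<in> Basis \<Longrightarrow> l \<bullet> b \<le> r \<bullet> b" for l r :: "real^'d"
  proof -
    have le': "l $ i \<le> r $ i" for i using le[of "axis i 1"] by (auto simp: Basis_cart_real inner_axis)
    define l' :: "real^'d bit0" where "l' = (\<chi> j. if j \<in> range f then l $ inv f j else 0)"
    define r' :: "real^'d bit0" where "r' = (\<chi> j. if j \<in> range f then r $ inv f j else 1)"
    have eq: "K \<inter> \<pi> -` box l r = box l' r'"
    proof (intro set_eqI)
      fix y
      have "y \<in> box l' r' \<longleftrightarrow> (\<forall>j. l'$j < y$j \<and> y$j < r'$j)" by (simp add: mem_box_cart)
      also have "\<dots> \<longleftrightarrow> (\<forall>i. l'$f i < y$f i \<and> y$f i < r'$f i) \<and> (\<forall>j\<in>-range f. l'$j < y$j \<and> y$j < r'$j)"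
        by blast
      also have "\<dots> \<longleftrightarrow> (\<forall>i. l$i < y$f i \<and> y$f i < r$i) \<and> (\<forall>j\<in>-range f. 0 < y$j \<and> y$j < 1)"
        by (simp add: l'_def r'_def f inv_f_f)
      also have "\<dots> \<longleftrightarrow> y \<in> K \<inter> \<pi> -` box l r"
        by (auto simp: K_def \<pi>_def mem_box_cart)
      finally show "y \<in> K \<inter> \<pi> -` box l r \<longleftrightarrow> y \<in> box l' r'" by simp
    qed
    have "emeasure M (box l r) = emeasure lborel (box l' r')" using MK[of "box l r"] eq by simp
    also have "\<dots> = (\<Prod>b\<in>Basis. (r' - l') \<bullet> b)"
      using le' by (auto simp: emeasure_lborel_box_eq Basis_cart_real inner_axis l'_def r'_def)
    also have "\<dots> = (\<Prod>j\<in>UNIV. r' $ j - l' $ j)" by (simp add: prod_Basis_cart inner_axis)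
    also have "\<dots> = (\<Prod>i\<in>UNIV. r' $ f i - l' $ f i)"
      using prod_inj_one[OF f, of "\<lambda>j. r'$j - l'$j"] by (simp add: l'_def r'_def)
    also have "\<dots> = (\<Prod>i\<in>UNIV. r $ i - l $ i)" by (simp add: l'_def r'_def f inv_f_f)
    also have "\<dots> = (\<Prod>b\<in>Basis. (r - l) \<bullet> b)" by (simp add: prod_Basis_cart inner_axis)
    finally show ?thesis .
  qed
  have LM: "lborel = M"
    by (rule lborel_eqI[OF box1]) (simp_all add: M_def)
  define u' :: "real^'d bit0" where "u' = (\<chi> j. if j \<in> range f then u $ inv f j else 0)"
  have u'y: "u' \<bullet> y = u \<bullet> \<pi> y" for y
  proof -
    have "u' \<bullet> y = (\<Sum>j\<in>UNIV. u' $ j * y $ j)" by (simp add: inner_vec_def)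
    also have "\<dots> = (\<Sum>i\<in>UNIV. u' $ f i * y $ f i)"
      by (rule sum_inj_zero[OF f]) (simp add: u'_def)
    also have "\<dots> = u \<bullet> \<pi> y" by (simp add: inner_vec_def u'_def \<pi>_def f inv_f_f)
    finally show ?thesis .
  qed
  have "u' \<bullet> u' = u \<bullet> u"
  proof -
    have "u' \<bullet> u' = u \<bullet> \<pi> u'" by (rule u'y)
    also have "\<pi> u' = u" by (simp add: \<pi>_def u'_def vec_eq_iff f inv_f_f)
    finally show ?thesis .
  qed
  then have u'1: "norm u' = 1" using u by (simp add: norm_eq_sqrt_inner)
  have u'f: "u' $ f i = u $ i" for i by (simp add: u'_def f inv_f_f)
  have \<pi>refl: "\<pi> (refl u' y) = refl u (\<pi> y)" for y
    unfolding refl_def u'y by (simp add: \<pi>_def vec_eq_iff u'f)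
  have rj: "refl u' y $ j = y $ j" if "j \<notin> range f" for y j
    using that by (simp add: refl_def u'_def)
  have Krefl: "refl u' y \<in> K \<longleftrightarrow> y \<in> K" for y
    by (simp add: K_def rj)
  have box2: "emeasure (distr lborel borel (refl u)) (box l r) = (\<Prod>b\<in>Basis. (r - l) \<bullet> b)"
    if le: "\<And>b. b \<in> Basis \<Longrightarrow> l \<bullet> b \<le> r \<bullet> b" for l r :: "real^'d"
  proof -
    have Bm: "refl u -` box l r \<in> sets borel"
      using measurable_sets[OF refl_cont, of "box l r" u] by simp
    have Cm: "K \<inter> \<pi> -` box l r \<in> sets borel"
      using measurable_sets[OF m\<pi>, of "box l r"] K by simp
    have seteq: "K \<inter> \<pi> -` (refl u -` box l r) = refl u' -` (K \<inter> \<pi> -` box l r)"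
      using Krefl \<pi>refl by auto
    have "emeasure (distr lborel borel (refl u)) (box l r) = emeasure lborel (refl u -` box l r)"
      by (simp add: emeasure_distr)
    also have "\<dots> = emeasure M (refl u -` box l r)" by (simp add: LM[symmetric])
    also have "\<dots> = emeasure lborel (K \<inter> \<pi> -` (refl u -` box l r))" by (rule MK[OF Bm])
    also have "\<dots> = emeasure (distr lborel borel (refl u')) (K \<inter> \<pi> -` box l r)"
      using Cm by (simp add: emeasure_distr seteq)
    also have "\<dots> = emeasure lborel (K \<inter> \<pi> -` box l r)" by (simp add: lborel_refl_wo[OF u'1])
    also have "\<dots> = emeasure M (box l r)" by (simp add: MK)
    also have "\<dots> = (\<Prod>b\<in>Basis. (r - l) \<bullet> b)" by (rule box1[OF le])
    finally show ?thesis .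
  qed
  show ?thesis by (rule lborel_eqI[OF box2, symmetric]) simp_all
qed

lemma exp_quad_bound:
  fixes b t :: real assumes b: "b > 0" and t: "t \<ge> 0"
  shows "(1 + t)^2 * exp (- b * t) \<le> (1 / (min 1 (b/4))^2) * exp (- (b/2) * t)"
proof -
  define m where "m = min 1 (b/4)"
  have m: "m > 0" "m \<le> 1" "m \<le> b/4" using b by (auto simp: m_def)
  have "m * t \<le> b/4 * t" using m t by (intro mult_right_mono) auto
  then have "m * (1 + t) \<le> 1 + b/4 * t" using m by (simp add: distrib_left)
  also have "\<dots> \<le> exp (b/4 * t)" by (rule exp_ge_add_one_self)
  finally have h: "m * (1 + t) \<le> exp (b/4 * t)" .
  have "(m * (1 + t))^2 \<le> (exp (b/4 * t))^2"
    using h m t by (intro power_mono) auto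
  also have "\<dots> = exp (b/2 * t)" by (simp add: power2_eq_square exp_add[symmetric])
  finally have h2: "m^2 * (1+t)^2 \<le> exp (b/2 * t)" by (simp add: power_mult_distrib)
  have "(1 + t)^2 * exp (- b * t) = (1+t)^2 * exp (-(b/2) * t) * exp (-(b/2) * t)"
    by (simp add: exp_add[symmetric])
  also have "(1+t)^2 * exp (-(b/2) * t) \<le> 1 / m^2"
  proof -
    have "(1+t)^2 \<le> exp (b/2 * t) / m^2" using h2 m by (simp add: field_simps)
    then have "(1+t)^2 * exp (-(b/2) * t) \<le> exp (b/2 * t) / m^2 * exp (-(b/2) * t)"
      by (intro mult_right_mono) auto
    also have "\<dots> = 1 / m^2" by (simp add: exp_minus field_simps)
    finally show ?thesis .
  qed
  then have "(1+t)^2 * exp (-(b/2) * t) * exp (-(b/2) * t) \<le> 1 / m^2 * exp (-(b/2) * t)"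
    by (intro mult_right_mono) auto
  finally show ?thesis by (simp add: m_def)
qed

lemma nn_integral_gauss1_finite:
  fixes b :: real assumes b: "b > 0"
  shows "(\<integral>\<^sup>+s. ennreal (exp (- b * s^2)) \<partial>lborel) < \<infinity>"
proof -
  define \<sigma> where "\<sigma> = sqrt (1 / (2 * b))"
  have \<sigma>: "\<sigma> > 0" using b by (simp add: \<sigma>_def)
  have s2: "2 * \<sigma>^2 = 1 / b" using b by (simp add: \<sigma>_def)
  have eq: "exp (- b * s^2) = sqrt (2 * pi * \<sigma>^2) * normal_density 0 \<sigma> s" for s
  proof -
    have "s^2 / (2*\<sigma>^2) = s^2 / (1/b)" by (simp only: s2)
    then have e: "b * s^2 = s^2 / (2*\<sigma>^2)" by simp
    have p: "sqrt (2 * pi * \<sigma>^2) > 0" using \<sigma> by simp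
    show ?thesis unfolding normal_density_def using p \<sigma> by (simp add: e)
  qed
  have "(\<integral>\<^sup>+s. ennreal (exp (- b * s^2)) \<partial>lborel) = (\<integral>\<^sup>+s. ennreal (sqrt (2 * pi * \<sigma>^2)) * ennreal (normal_density 0 \<sigma> s) \<partial>lborel)"
    by (intro nn_integral_cong, subst eq, rule ennreal_mult) (auto simp: normal_density_nonneg)
  also have "\<dots> = ennreal (sqrt (2 * pi * \<sigma>^2)) * (\<integral>\<^sup>+s. ennreal (normal_density 0 \<sigma> s) \<partial>lborel)"
    by (simp add: nn_integral_cmult)
  also have "(\<integral>\<^sup>+s. ennreal (normal_density 0 \<sigma> s) \<partial>lborel) = ennreal 1"
    using integral_normal_density[of 0 \<sigma>] integrable_normal_density[of 0 \<sigma>]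
    using \<sigma> by (subst nn_integral_eq_integral) auto
  finally show ?thesis by (simp add: ennreal_mult_less_top)
qed

lemma inner_self_cart: "(x::real^'n::finite) \<bullet> x = (\<Sum>i\<in>UNIV. (x $ i)^2)"
  by (simp add: inner_vec_def power2_eq_square)

lemma nn_integral_gauss_finite:
  fixes b :: real assumes b: "b > 0"
  shows "(\<integral>\<^sup>+x. ennreal (exp (- b * (x \<bullet> x))) \<partial>(lborel :: (real^'n::finite) measure)) < \<infinity>"
proof -
  have pw: "ennreal (exp (- b * (x \<bullet> x))) = (\<Prod>c\<in>Basis. ennreal (exp (- b * (x \<bullet> c)^2)))" for x :: "real^'n"
  proof -
    have "exp (- b * (x \<bullet> x)) = (\<Prod>i\<in>UNIV. exp (- b * (x $ i)^2))"
      by (simp add: inner_self_cart sum_distrib_left exp_sum[symmetric])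
    then show ?thesis
      by (simp add: prod_Basis_cart inner_axis prod_ennreal)
  qed
  have "(\<integral>\<^sup>+x. ennreal (exp (- b * (x \<bullet> x))) \<partial>(lborel :: (real^'n::finite) measure))
      = (\<integral>\<^sup>+x. (\<Prod>c\<in>Basis. ennreal (exp (- b * (x \<bullet> c)^2))) \<partial>(lborel :: (real^'n::finite) measure))"
    by (rule nn_integral_cong) (rule pw)
  also have "\<dots> = (\<Prod>c\<in>(Basis::(real^'n) set). (\<integral>\<^sup>+s. ennreal (exp (- b * s^2)) \<partial>lborel))"
    by (rule nn_integral_lborel_prod[of "\<lambda>c s. ennreal (exp (- b * s^2))"]) auto
  also have "\<dots> < \<infinity>"
    using nn_integral_gauss1_finite[OF b] by (simp add: power_less_top_ennreal)
  finally show ?thesis .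
qed

definition dm :: "(real^'n::finite \<Rightarrow> real) \<Rightarrow> ((real^'n) \<times> real) measure" where
  "dm g = density lborel (\<lambda>x. ennreal (g x)) \<Otimes>\<^sub>M density lborel (\<lambda>z. ennreal (std_normal_density z))"

lemma data_measure_dm: "data_measure Q = dm (gauss_density Q)"
  by (simp add: data_measure_def dm_def)

lemma sets_dm[measurable_cong]: "sets (dm g) = sets (borel \<Otimes>\<^sub>M borel)"
  unfolding dm_def by (rule sets_pair_measure_cong) simp_all

lemma std_normal_sq_finite:
  "(\<integral>\<^sup>+z. ennreal (1 + z^2) \<partial>density lborel (\<lambda>z. ennreal (std_normal_density z))) < \<infinity>"
proof -
  have i: "integrable lborel (\<lambda>z. std_normal_density z * z^0 + std_normal_density z * z^2)"
    by (intro Bochner_Integration.integrable_add integrable_std_normal_moment)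
  have "(\<integral>\<^sup>+z. ennreal (1 + z^2) \<partial>density lborel (\<lambda>z. ennreal (std_normal_density z)))
      = (\<integral>\<^sup>+z. ennreal (std_normal_density z) * ennreal (1 + z^2) \<partial>lborel)"
    by (simp add: nn_integral_density)
  also have "\<dots> = (\<integral>\<^sup>+z. ennreal (norm (std_normal_density z * z^0 + std_normal_density z * z^2)) \<partial>lborel)"
    by (intro nn_integral_cong) (simp add: ennreal_mult[symmetric] distrib_left normal_density_nonneg)
  also have "\<dots> < \<infinity>" using i by (simp add: integrable_iff_bounded)
  finally show ?thesis .
qed

lemma dm_integrable:
  fixes g :: "real^'n::finite \<Rightarrow> real"
  assumes gm[measurable]: "g \<in> borel_measurable borel"
    and gb: "\<And>x. g x \<le> C * exp (- b * (x \<bullet> x))" and b: "b > 0"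
    and fm: "f \<in> borel_measurable (dm g)"
    and fb: "\<And>x z. \<bar>f (x, z)\<bar> \<le> K * (1 + x \<bullet> x)^2 * (1 + z^2)"
  shows "integrable (dm g) f"
proof -
  define M1 where "M1 = density lborel (\<lambda>x. ennreal (g x))"
  define M2 where "M2 = density lborel (\<lambda>z. ennreal (std_normal_density z))"
  interpret M2: prob_space M2 unfolding M2_def by (rule prob_space_normal_density) simp
  define h where "h xz = \<bar>K\<bar> * (1 + fst xz \<bullet> fst xz)^2 * (1 + (snd xz)^2)" for xz :: "(real^'n) \<times> real"
  have hm: "h \<in> borel_measurable (dm g)" unfolding h_def by measurable
  define K0 where "K0 = 1 / (min 1 (b/4))^2"
  define Cz where "Cz = (\<integral>\<^sup>+z. ennreal (1 + z^2) \<partial>M2)"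
  have Cz: "Cz < \<infinity>" unfolding Cz_def M2_def by (rule std_normal_sq_finite)
  have pw: "ennreal (g x) * ennreal (\<bar>K\<bar> * (1 + x \<bullet> x)^2) \<le> ennreal (\<bar>K\<bar> * \<bar>C\<bar> * K0 * exp (- (b/2) * (x \<bullet> x)))" for x
  proof (cases "g x \<le> 0")
    case True then show ?thesis by (simp add: ennreal_neg)
  next
    case False
    then have Cpos: "C > 0" using gb[of x] by (smt (verit) exp_gt_zero mult_nonpos_nonneg)
    have t: "x \<bullet> x \<ge> 0" by simp
    have "g x * (\<bar>K\<bar> * (1 + x \<bullet> x)^2) \<le> C * exp (- b * (x \<bullet> x)) * (\<bar>K\<bar> * (1 + x \<bullet> x)^2)"
      using gb[of x] by (intro mult_right_mono) auto
    also have "\<dots> = \<bar>K\<bar> * C * ((1 + x \<bullet> x)^2 * exp (- b * (x \<bullet> x)))" by (simp add: algebra_simps)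
    also have "\<dots> \<le> \<bar>K\<bar> * C * (K0 * exp (- (b/2) * (x \<bullet> x)))"
      using exp_quad_bound[OF b t] Cpos unfolding K0_def by (intro mult_left_mono) auto
    finally have "g x * (\<bar>K\<bar> * (1 + x \<bullet> x)^2) \<le> \<bar>K\<bar> * \<bar>C\<bar> * K0 * exp (- (b/2) * (x \<bullet> x))"
      using Cpos by (simp add: algebra_simps)
    then show ?thesis using False by (simp add: ennreal_mult[symmetric] ennreal_leI)
  qed
  have "(\<integral>\<^sup>+xz. ennreal (norm (h xz)) \<partial>dm g) = (\<integral>\<^sup>+xz. ennreal (h xz) \<partial>(M1 \<Otimes>\<^sub>M M2))"
    by (simp add: dm_def M1_def M2_def h_def)
  also have "\<dots> = (\<integral>\<^sup>+x. \<integral>\<^sup>+z. ennreal (h (x, z)) \<partial>M2 \<partial>M1)"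
    by (rule M2.nn_integral_fst[symmetric]) (simp add: h_def M1_def M2_def)
  also have "\<dots> = (\<integral>\<^sup>+x. ennreal (\<bar>K\<bar> * (1 + x \<bullet> x)^2) * Cz \<partial>M1)"
  proof (intro nn_integral_cong)
    fix x
    have "(\<integral>\<^sup>+z. ennreal (h (x, z)) \<partial>M2) = (\<integral>\<^sup>+z. ennreal (\<bar>K\<bar> * (1 + x \<bullet> x)^2) * ennreal (1 + z^2) \<partial>M2)"
    proof (intro nn_integral_cong)
      fix z
      have "h (x, z) = (\<bar>K\<bar> * (1 + x \<bullet> x)^2) * (1 + z^2)" by (simp add: h_def)
      then show "ennreal (h (x, z)) = ennreal (\<bar>K\<bar> * (1 + x \<bullet> x)^2) * ennreal (1 + z^2)"
        by (simp only:) (rule ennreal_mult, auto)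
    qed
    also have "\<dots> = ennreal (\<bar>K\<bar> * (1 + x \<bullet> x)^2) * Cz"
      unfolding Cz_def by (rule nn_integral_cmult) (simp add: M2_def)
    finally show "(\<integral>\<^sup>+z. ennreal (h (x, z)) \<partial>M2) = ennreal (\<bar>K\<bar> * (1 + x \<bullet> x)^2) * Cz" .
  qed
  also have "\<dots> = (\<integral>\<^sup>+x. ennreal (g x) * (ennreal (\<bar>K\<bar> * (1 + x \<bullet> x)^2) * Cz) \<partial>lborel)"
    unfolding M1_def by (rule nn_integral_density) simp_all
  also have "\<dots> \<le> (\<integral>\<^sup>+x. ennreal (\<bar>K\<bar> * \<bar>C\<bar> * K0) * ennreal (exp (- (b/2) * (x \<bullet> x))) * Cz \<partial>(lborel :: (real^'n) measure))"
  proof (intro nn_integral_mono)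
    fix x
    have "ennreal (g x) * (ennreal (\<bar>K\<bar> * (1 + x \<bullet> x)^2) * Cz) = (ennreal (g x) * ennreal (\<bar>K\<bar> * (1 + x \<bullet> x)^2)) * Cz"
      by (simp add: mult.assoc)
    also have "\<dots> \<le> ennreal (\<bar>K\<bar> * \<bar>C\<bar> * K0 * exp (- (b/2) * (x \<bullet> x))) * Cz"
      by (intro mult_right_mono pw) simp
    also have "\<dots> = ennreal (\<bar>K\<bar> * \<bar>C\<bar> * K0) * ennreal (exp (- (b/2) * (x \<bullet> x))) * Cz"
      by (simp add: ennreal_mult[symmetric] K0_def)
    finally show "ennreal (g x) * (ennreal (\<bar>K\<bar> * (1 + x \<bullet> x)^2) * Cz) \<le> ennreal (\<bar>K\<bar> * \<bar>C\<bar> * K0) * ennreal (exp (- (b/2) * (x \<bullet> x))) * Cz" .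
  qed
  also have "\<dots> = ennreal (\<bar>K\<bar> * \<bar>C\<bar> * K0) * (\<integral>\<^sup>+x. ennreal (exp (- (b/2) * (x \<bullet> x))) \<partial>(lborel :: (real^'n) measure)) * Cz"
    by (simp add: nn_integral_cmult nn_integral_multc mult.assoc)
  also have "\<dots> < \<infinity>"
    using nn_integral_gauss_finite[of "b/2", where 'n='n] b Cz by (simp add: ennreal_mult_less_top)
  finally have hi: "integrable (dm g) h" using hm by (intro integrableI_bounded) auto
  show ?thesis
  proof (rule Bochner_Integration.integrable_bound[OF hi fm], intro AE_I2)
    fix xz :: "(real^'n) \<times> real"
    obtain x z where xz: "xz = (x, z)" by (cases xz)
    have "\<bar>f (x,z)\<bar> \<le> K * (1 + x \<bullet> x)^2 * (1 + z^2)" by (rule fb)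
    also have "\<dots> \<le> h (x,z)" unfolding h_def fst_conv snd_conv
      by (intro mult_right_mono) (auto simp: zero_le_mult_iff)
    finally show "norm (f xz) \<le> norm (h xz)" using xz by (simp add: h_def)
  qed
qed

lemma dm_refl:
  fixes g :: "real^'n::finite \<Rightarrow> real" and F :: "(real^'n) \<times> real \<Rightarrow> real"
  assumes gm[measurable]: "g \<in> borel_measurable borel"
    and ginv: "\<And>x. g (refl u x) = g x" and u: "norm u = 1"
    and Fm[measurable]: "F \<in> borel_measurable (borel \<Otimes>\<^sub>M borel)"
  shows "(\<integral>xz. F (refl u (fst xz), snd xz) \<partial>dm g) = (\<integral>xz. F xz \<partial>dm g)"
proof -
  define M1 where "M1 = density lborel (\<lambda>x. ennreal (g x))"
  define M2 where "M2 = density lborel (\<lambda>z. ennreal (std_normal_density z))"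
  interpret M2: prob_space M2 unfolding M2_def by (rule prob_space_normal_density) simp
  have D1: "distr M1 borel (refl u) = M1"
  proof -
    have "density (distr lborel borel (refl u)) (\<lambda>x. ennreal (g x)) = distr (density lborel (\<lambda>x. ennreal (g (refl u x)))) borel (refl u)"
      by (rule density_distr) simp_all
    then show ?thesis unfolding M1_def lborel_refl[OF u] ginv by simp
  qed
  have D2: "distr M2 borel (\<lambda>z. z) = M2" by (rule distr_id2) (simp add: M2_def)
  have "distr M1 borel (refl u) \<Otimes>\<^sub>M distr M2 borel (\<lambda>z. z) = distr (M1 \<Otimes>\<^sub>M M2) (borel \<Otimes>\<^sub>M borel) (\<lambda>(x, y). (refl u x, y))"
  proof (rule pair_measure_distr)
    show "sigma_finite_measure (distr M2 borel (\<lambda>z. z))" unfolding D2 by (rule M2.sigma_finite_measure_axioms)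
  qed (simp_all add: M1_def M2_def)
  then have "M1 \<Otimes>\<^sub>M M2 = distr (M1 \<Otimes>\<^sub>M M2) (borel \<Otimes>\<^sub>M borel) (\<lambda>(x, y). (refl u x, y))"
    by (simp only: D1 D2)
  then have eq: "dm g = distr (dm g) (borel \<Otimes>\<^sub>M borel) (\<lambda>(x, y). (refl u x, y))"
    by (simp add: dm_def M1_def M2_def)
  have "(\<integral>xz. F xz \<partial>dm g) = (\<integral>xz. F xz \<partial>distr (dm g) (borel \<Otimes>\<^sub>M borel) (\<lambda>(x, y). (refl u x, y)))"
    using eq by simp
  also have "\<dots> = (\<integral>xz. F ((\<lambda>(x, y). (refl u x, y)) xz) \<partial>dm g)"
  proof -
    have Tm: "(\<lambda>(x, y). (refl u x, y)) \<in> measurable (dm g) (borel \<Otimes>\<^sub>M borel)" by measurable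
    show ?thesis by (rule integral_distr[OF Tm Fm])
  qed
  also have "\<dots> = (\<integral>xz. F (refl u (fst xz), snd xz) \<partial>dm g)"
    by (simp add: case_prod_beta)
  finally show ?thesis by simp
qed

definition qf :: "real^'n::finite^'n \<Rightarrow> real^'n \<Rightarrow> real" where
  "qf M x = x \<bullet> (M *v x)"

definition mn :: "real^'n::finite^'n \<Rightarrow> real" where
  "mn M = (\<Sum>i\<in>UNIV. \<Sum>j\<in>UNIV. \<bar>M $ i $ j\<bar>)"

lemma mulv_measurable[measurable]: "(\<lambda>x. M *v x) \<in> borel_measurable borel"
  for M :: "real^'n::finite^'m::finite"
  by (intro borel_measurable_continuous_onI linear_continuous_on matrix_vector_mul_bounded_linear)

lemma nth_measurable[measurable]: "(\<lambda>x::real^'n::finite. x $ i) \<in> borel_measurable borel"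
proof -
  have "(\<lambda>x::real^'n. x $ i) = (\<lambda>x. x \<bullet> axis i 1)" by (simp add: inner_axis)
  then show ?thesis by simp
qed

lemma qf_measurable[measurable]: "qf M \<in> borel_measurable borel"
  unfolding qf_def by measurable

lemma qf_bound: "\<bar>qf M x\<bar> \<le> mn M * (x \<bullet> x)"
proof -
  have "\<bar>qf M x\<bar> \<le> norm x * norm (M *v x)" unfolding qf_def by (rule Cauchy_Schwarz_ineq2)
  also have "norm (M *v x) \<le> onorm ((*v) M) * norm x"
    by (rule onorm) (rule matrix_vector_mul_bounded_linear)
  also have "onorm ((*v) M) \<le> mn M" unfolding mn_def by (rule onorm_le_matrix_component_sum)
  finally have "\<bar>qf M x\<bar> \<le> norm x * (mn M * norm x)" by (simp add: mult_left_mono mult_right_mono)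
  then show ?thesis by (simp add: power2_norm_eq_inner[symmetric] power2_eq_square mult_ac)
qed

lemma mn_nonneg: "mn M \<ge> 0" unfolding mn_def by (intro sum_nonneg) auto

lemma mn_le_norm: "mn M \<le> real (CARD('n) * CARD('n)) * norm M" for M :: "real^'n::finite^'n"
proof -
  have "mn M \<le> (\<Sum>i\<in>(UNIV::'n set). \<Sum>j\<in>(UNIV::'n set). norm M)"
    unfolding mn_def
  proof (intro sum_mono)
    fix i j :: 'n
    have "\<bar>M $ i $ j\<bar> \<le> norm (M $ i)" by (rule component_le_norm_cart)
    also have "\<dots> \<le> norm M" by (rule Finite_Cartesian_Product.norm_nth_le)
    finally show "\<bar>M $ i $ j\<bar> \<le> norm M" .
  qed
  then show ?thesis by simp
qed

lemma qf_add: "qf (M + K) x = qf M x + qf K x"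
  by (simp add: qf_def matrix_vector_mult_add_rdistrib inner_add_right)

lemma qf_sum: "qf K x = (\<Sum>i\<in>UNIV. \<Sum>j\<in>UNIV. K $ i $ j * (x $ i * x $ j))"
  by (simp add: qf_def inner_vec_def matrix_vector_mult_def sum_distrib_left mult_ac)

lemma inner_mat: "(A::real^'n::finite^'m::finite) \<bullet> B = (\<Sum>i\<in>UNIV. \<Sum>j\<in>UNIV. A $ i $ j * B $ i $ j)"
  by (simp add: inner_vec_def)

lemma inner_prod_sum: "((x::real^'n::finite) \<bullet> a) * (x \<bullet> c) = (\<Sum>i\<in>UNIV. \<Sum>j\<in>UNIV. (a $ i * c $ j) * (x $ i * x $ j))"
  by (simp add: inner_vec_def sum_product mult_ac)

lemma comp_sq_le: "\<bar>(x::real^'n::finite) $ i * x $ j\<bar> \<le> x \<bullet> x"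
proof -
  have "\<bar>x $ i\<bar> * \<bar>x $ j\<bar> \<le> norm x * norm x"
    by (intro mult_mono component_le_norm_cart) auto
  then show ?thesis by (simp add: abs_mult power2_norm_eq_inner[symmetric] power2_eq_square)
qed

lemma z_bound2: "(1 + \<bar>z::real\<bar>)^2 \<le> 2 * (1 + z^2)"
proof -
  have "2 * \<bar>z\<bar> \<le> 1 + z^2" using sum_squares_bound[of "\<bar>z\<bar>" 1] by (simp add: power2_eq_square)
  then show ?thesis by (simp add: power2_eq_square algebra_simps)
qed

lemma z_bound1: "1 + \<bar>z::real\<bar> \<le> 2 * (1 + z^2)"
proof -
  have "(1 + \<bar>z\<bar>) * 1 \<le> (1 + \<bar>z\<bar>) * (1 + \<bar>z\<bar>)" by (intro mult_left_mono) auto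
  then have "1 + \<bar>z\<bar> \<le> (1 + \<bar>z\<bar>)^2" by (simp add: power2_eq_square)
  also have "\<dots> \<le> 2 * (1 + z^2)" by (rule z_bound2)
  finally show ?thesis .
qed

locale gs =
  fixes g :: "real^'n::finite \<Rightarrow> real" and C b :: real and w :: "real^'n" and \<sigma> :: real
  assumes gm[measurable]: "g \<in> borel_measurable borel"
    and gb: "\<And>x. g x \<le> C * exp (- b * (x \<bullet> x))" and bpos: "b > 0"
begin

definition Y :: "(real^'n) \<times> real \<Rightarrow> real" where "Y xz = (fst xz \<bullet> w)^2 + \<sigma> * snd xz"
definition er :: "real^'n^'n \<Rightarrow> (real^'n) \<times> real \<Rightarrow> real" where "er M xz = Y xz - qf M (fst xz)"
definition ell :: "real^'n^'n \<Rightarrow> real" where "ell M = (\<integral>xz. (er M xz)^2 \<partial>dm g)"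
definition Gam :: "real^'n^'n \<Rightarrow> real^'n^'n" where
  "Gam M = (\<chi> i j. -2 * (\<integral>xz. er M xz * (fst xz $ i * fst xz $ j) \<partial>dm g))"

lemma Y_measurable[measurable]: "Y \<in> borel_measurable (borel \<Otimes>\<^sub>M borel)"
  unfolding Y_def by measurable

lemma er_measurable[measurable]: "er M \<in> borel_measurable (borel \<Otimes>\<^sub>M borel)"
  unfolding er_def by measurable

lemma int: "f \<in> borel_measurable (borel \<Otimes>\<^sub>M borel) \<Longrightarrow> (\<And>x z. \<bar>f (x, z)\<bar> \<le> K * (1 + x \<bullet> x)^2 * (1 + z^2))
  \<Longrightarrow> integrable (dm g) f"
  by (rule dm_integrable[OF gm gb bpos]) (simp_all add: measurable_cong_sets[OF sets_dm refl])

definition cM :: "real^'n^'n \<Rightarrow> real" where "cM M = w \<bullet> w + \<bar>\<sigma>\<bar> + mn M"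

lemma cM_nonneg: "cM M \<ge> 0" unfolding cM_def using mn_nonneg[of M] by (simp add: add_nonneg_nonneg)

lemma er_bound: "\<bar>er M (x, z)\<bar> \<le> cM M * ((1 + x \<bullet> x) * (1 + \<bar>z\<bar>))"
proof -
  define T where "T = (1 + x \<bullet> x) * (1 + \<bar>z\<bar>)"
  have xx: "x \<bullet> x \<ge> 0" by simp
  have Te: "T = 1 + x \<bullet> x + \<bar>z\<bar> * (1 + x \<bullet> x)" unfolding T_def by (simp add: algebra_simps)
  have p: "\<bar>z\<bar> * (1 + x \<bullet> x) \<ge> 0" using xx by simp
  have T1: "x \<bullet> x \<le> T" using Te p by linarith
  have T2: "\<bar>z\<bar> \<le> T" using Te xx p
    by (smt (verit) mult_left_mono mult_cancel_left1 abs_ge_zero)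
  have "(x \<bullet> w)^2 \<le> (x \<bullet> x) * (w \<bullet> w)" by (rule Cauchy_Schwarz_ineq)
  also have "\<dots> \<le> T * (w \<bullet> w)" using T1 by (intro mult_right_mono) auto
  finally have a: "\<bar>(x \<bullet> w)^2\<bar> \<le> (w \<bullet> w) * T" by (simp add: mult.commute)
  have b: "\<bar>\<sigma> * snd (x,z)\<bar> \<le> \<bar>\<sigma>\<bar> * T" using T2 by (simp add: abs_mult mult_left_mono)
  have "\<bar>qf M x\<bar> \<le> mn M * (x \<bullet> x)" by (rule qf_bound)
  also have "\<dots> \<le> mn M * T" using T1 mn_nonneg[of M] by (intro mult_left_mono) auto
  finally have c: "\<bar>qf M x\<bar> \<le> mn M * T" .
  have tri: "\<bar>a + b - c\<bar> \<le> \<bar>a\<bar> + \<bar>b\<bar> + \<bar>c\<bar>" for a b c :: real by arith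
  have "\<bar>er M (x, z)\<bar> \<le> \<bar>(x \<bullet> w)^2\<bar> + \<bar>\<sigma> * snd (x,z)\<bar> + \<bar>qf M x\<bar>"
    unfolding er_def Y_def fst_conv snd_conv by (rule tri)
  also have "\<dots> \<le> (w \<bullet> w) * T + \<bar>\<sigma>\<bar> * T + mn M * T" using a b c by linarith
  also have "\<dots> = cM M * T" by (simp add: cM_def algebra_simps)
  finally show ?thesis unfolding T_def .
qed

lemma int_er_sq: "integrable (dm g) (\<lambda>xz. (er M xz)^2)"
proof (rule int)
  fix x :: "real^'n" and z :: real
  have "\<bar>(er M (x,z))^2\<bar> = \<bar>er M (x,z)\<bar>^2" by simp
  also have "\<dots> \<le> (cM M * ((1 + x \<bullet> x) * (1 + \<bar>z\<bar>)))^2"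
    by (intro power_mono er_bound) auto
  also have "\<dots> = (cM M)^2 * (1 + x \<bullet> x)^2 * (1 + \<bar>z\<bar>)^2" by (simp add: power_mult_distrib)
  also have "\<dots> \<le> (cM M)^2 * (1 + x \<bullet> x)^2 * (2 * (1 + z^2))"
    by (intro mult_left_mono z_bound2) auto
  also have "\<dots> = (2 * (cM M)^2) * (1 + x \<bullet> x)^2 * (1 + z^2)" by (simp add: mult_ac)
  finally show "\<bar>(er M (x,z))^2\<bar> \<le> (2 * (cM M)^2) * (1 + x \<bullet> x)^2 * (1 + z^2)" .
qed simp

lemma int_er_qf: "integrable (dm g) (\<lambda>xz. er M xz * qf K (fst xz))"
proof (rule int)
  fix x :: "real^'n" and z :: real
  have xx: "x \<bullet> x \<ge> 0" by simp
  have "\<bar>er M (x,z) * qf K x\<bar> \<le> (cM M * ((1 + x \<bullet> x) * (1 + \<bar>z\<bar>))) * (mn K * (x \<bullet> x))"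
    unfolding abs_mult by (intro mult_mono er_bound qf_bound) (auto simp: cM_nonneg mn_nonneg)
  also have "\<dots> \<le> (cM M * ((1 + x \<bullet> x) * (2 * (1 + z^2)))) * (mn K * (1 + x \<bullet> x))"
    using xx by (intro mult_mono mult_left_mono z_bound1) (auto simp: cM_nonneg mn_nonneg)
  also have "\<dots> = (2 * cM M * mn K) * (1 + x \<bullet> x)^2 * (1 + z^2)" by (simp add: power2_eq_square mult_ac)
  finally show "\<bar>er M (x,z) * qf K (fst (x,z))\<bar> \<le> (2 * cM M * mn K) * (1 + x \<bullet> x)^2 * (1 + z^2)" by simp
qed simp

lemma int_qf_sq: "integrable (dm g) (\<lambda>xz. (qf K (fst xz))^2)"
proof (rule int)
  fix x :: "real^'n" and z :: real
  have xx: "x \<bullet> x \<ge> 0" by simp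
  have "\<bar>(qf K x)^2\<bar> = \<bar>qf K x\<bar>^2" by simp
  also have "\<dots> \<le> (mn K * (x \<bullet> x))^2" by (intro power_mono qf_bound) auto
  also have "\<dots> \<le> (mn K * (1 + x \<bullet> x))^2" using xx mn_nonneg[of K] by (intro power_mono mult_left_mono) auto
  also have "\<dots> = (mn K)^2 * (1 + x \<bullet> x)^2 * 1" by (simp add: power_mult_distrib)
  also have "\<dots> \<le> (mn K)^2 * (1 + x \<bullet> x)^2 * (1 + z^2)" by (intro mult_left_mono) auto
  finally show "\<bar>(qf K (fst (x,z)))^2\<bar> \<le> (mn K)^2 * (1 + x \<bullet> x)^2 * (1 + z^2)" by simp
qed simp

lemma int_er_ij: "integrable (dm g) (\<lambda>xz. er M xz * (fst xz $ i * fst xz $ j))"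
proof (rule int)
  fix x :: "real^'n" and z :: real
  have xx: "x \<bullet> x \<ge> 0" by simp
  have "\<bar>er M (x,z) * (x $ i * x $ j)\<bar> \<le> (cM M * ((1 + x \<bullet> x) * (1 + \<bar>z\<bar>))) * (x \<bullet> x)"
    unfolding abs_mult[of "er M (x,z)"] by (intro mult_mono er_bound comp_sq_le) (auto simp: cM_nonneg)
  also have "\<dots> \<le> (cM M * ((1 + x \<bullet> x) * (2 * (1 + z^2)))) * (1 + x \<bullet> x)"
    using xx by (intro mult_mono mult_left_mono z_bound1) (auto simp: cM_nonneg)
  also have "\<dots> = (2 * cM M) * (1 + x \<bullet> x)^2 * (1 + z^2)" by (simp add: power2_eq_square mult_ac)
  finally show "\<bar>er M (x,z) * (fst (x,z) $ i * fst (x,z) $ j)\<bar> \<le> (2 * cM M) * (1 + x \<bullet> x)^2 * (1 + z^2)" by simp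
qed simp

lemma int_sum:
  "(\<integral>xz. er M xz * (\<Sum>i\<in>UNIV. \<Sum>j\<in>UNIV. c i j * (fst xz $ i * fst xz $ j)) \<partial>dm g)
   = (\<Sum>i\<in>UNIV. \<Sum>j\<in>UNIV. c i j * (\<integral>xz. er M xz * (fst xz $ i * fst xz $ j) \<partial>dm g))"
proof -
  have "(\<integral>xz. er M xz * (\<Sum>i\<in>UNIV. \<Sum>j\<in>UNIV. c i j * (fst xz $ i * fst xz $ j)) \<partial>dm g)
      = (\<integral>xz. (\<Sum>i\<in>UNIV. \<Sum>j\<in>UNIV. c i j * (er M xz * (fst xz $ i * fst xz $ j))) \<partial>dm g)"
    by (simp add: sum_distrib_left mult_ac)
  also have "\<dots> = (\<Sum>i\<in>UNIV. (\<integral>xz. (\<Sum>j\<in>UNIV. c i j * (er M xz * (fst xz $ i * fst xz $ j))) \<partial>dm g))"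
    by (rule Bochner_Integration.integral_sum) (auto intro!: Bochner_Integration.integrable_sum integrable_mult_right int_er_ij)
  also have "\<dots> = (\<Sum>i\<in>UNIV. \<Sum>j\<in>UNIV. c i j * (\<integral>xz. er M xz * (fst xz $ i * fst xz $ j) \<partial>dm g))"
    by (intro sum.cong refl, subst Bochner_Integration.integral_sum)
       (auto intro!: integrable_mult_right int_er_ij)
  finally show ?thesis .
qed

lemma Gam_inner: "K \<bullet> Gam M = -2 * (\<integral>xz. er M xz * qf K (fst xz) \<partial>dm g)"
  unfolding qf_sum int_sum inner_mat Gam_def by (simp add: sum_distrib_left mult_ac)

lemma Gam_bil: "a \<bullet> (Gam M *v c) = -2 * (\<integral>xz. er M xz * ((fst xz \<bullet> a) * (fst xz \<bullet> c)) \<partial>dm g)"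
  unfolding inner_prod_sum int_sum Gam_def
  by (simp add: inner_vec_def matrix_vector_mult_def sum_distrib_left mult_ac)

lemma Gam_sym: "transpose (Gam M) = Gam M"
  by (simp add: Gam_def transpose_def vec_eq_iff mult_ac)

end

lemma inner_transpose: "transpose X \<bullet> transpose Y = X \<bullet> (Y::real^'n::finite^'n)"
  unfolding inner_mat transpose_def by simp (rule sum.swap)

lemma inner_mmult_A: "(H ** transpose W) \<bullet> G = H \<bullet> (G ** W)" for H W G :: "real^'n::finite^'n"
proof -
  have "(H ** transpose W) \<bullet> G = (\<Sum>i\<in>UNIV. \<Sum>j\<in>UNIV. \<Sum>k\<in>UNIV. H $ i $ k * W $ j $ k * G $ i $ j)"
    by (simp add: inner_mat matrix_matrix_mult_def transpose_def sum_distrib_right sum_distrib_left mult_ac)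
  also have "\<dots> = (\<Sum>i\<in>UNIV. \<Sum>k\<in>UNIV. \<Sum>j\<in>UNIV. H $ i $ k * W $ j $ k * G $ i $ j)"
    by (rule sum.cong[OF refl], rule sum.swap)
  also have "\<dots> = H \<bullet> (G ** W)"
    by (simp add: inner_mat matrix_matrix_mult_def sum_distrib_left mult_ac)
  finally show ?thesis .
qed

lemma inner_mmult_B: "(W ** transpose H) \<bullet> G = H \<bullet> (transpose G ** W)" for H W G :: "real^'n::finite^'n"
proof -
  have "(W ** transpose H) \<bullet> G = transpose (W ** transpose H) \<bullet> transpose G" by (simp add: inner_transpose)
  also have "\<dots> = (H ** transpose W) \<bullet> transpose G" by (simp add: matrix_transpose_mul)
  also have "\<dots> = H \<bullet> (transpose G ** W)" by (rule inner_mmult_A)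
  finally show ?thesis .
qed

lemma mmult_add_r: "(A + B) ** C = A ** C + B ** (C::real^'p::finite^'n::finite)"
  for A B :: "real^'n^'m::finite"
  by (vector matrix_matrix_mult_def sum.distrib[symmetric] field_simps)

lemma linear_transpose: "linear (transpose :: real^'n::finite^'m::finite \<Rightarrow> real^'m^'n)"
  by (intro linearI) (simp_all add: transpose_def vec_eq_iff)

lemma bilinear_mmult: "bilinear (\<lambda>A B::real^'n::finite^'n. A ** B)"
  unfolding bilinear_def
  by (auto intro!: linearI simp: matrix_add_ldistrib mmult_add_r matrix_scalar_ac scalar_matrix_assoc)

lemma mmult_deriv:
  "((\<lambda>W::real^'n::finite^'n. W ** transpose W) has_derivative (\<lambda>H. W ** transpose H + H ** transpose W)) (at W)"
proof -
  have bb: "bounded_bilinear (\<lambda>A B::real^'n^'n. A ** B)"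
    using bilinear_mmult bilinear_conv_bounded_bilinear by blast
  have bt: "bounded_linear (transpose :: real^'n^'n \<Rightarrow> real^'n^'n)"
    using linear_transpose linear_conv_bounded_linear by blast
  have "((\<lambda>W::real^'n^'n. W ** transpose W) has_derivative (\<lambda>H. W ** transpose H + H ** transpose W)) (at W)"
    using bounded_bilinear.FDERIV[OF bb has_derivative_ident bounded_linear_imp_has_derivative[OF bt]]
    by simp
  then show ?thesis .
qed

context gs begin

lemma int_xx2: "integrable (dm g) (\<lambda>xz. (fst xz \<bullet> fst xz)^2)"
proof (rule int)
  fix x :: "real^'n" and z :: real
  have xx: "x \<bullet> x \<ge> 0" by simp
  have "\<bar>(x \<bullet> x)^2\<bar> = (x \<bullet> x)^2" by simp
  also have "\<dots> \<le> (1 + x \<bullet> x)^2 * 1" using xx by (simp add: power_mono)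
  also have "\<dots> \<le> (1 + x \<bullet> x)^2 * (1 + z^2)" by (intro mult_left_mono) auto
  finally show "\<bar>(fst (x, z) \<bullet> fst (x, z))^2\<bar> \<le> 1 * (1 + x \<bullet> x)^2 * (1 + z^2)" by simp
qed simp

lemma ell_expand: "ell (M + K) = ell M + K \<bullet> Gam M + (\<integral>xz. (qf K (fst xz))^2 \<partial>dm g)"
proof -
  have e: "(er (M + K) xz)^2 = ((er M xz)^2 + (-2) * (er M xz * qf K (fst xz))) + (qf K (fst xz))^2" for xz
    by (simp add: er_def qf_add power2_eq_square algebra_simps)
  have "ell (M + K) = (\<integral>xz. ((er M xz)^2 + (-2) * (er M xz * qf K (fst xz))) + (qf K (fst xz))^2 \<partial>dm g)"
    unfolding ell_def e ..
  also have "\<dots> = ((\<integral>xz. (er M xz)^2 \<partial>dm g) + (-2) * (\<integral>xz. er M xz * qf K (fst xz) \<partial>dm g))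
                  + (\<integral>xz. (qf K (fst xz))^2 \<partial>dm g)"
    by (simp add: Bochner_Integration.integral_add int_er_sq int_er_qf int_qf_sq)
  finally show ?thesis by (simp add: ell_def Gam_inner)
qed

lemma ell_deriv: "(ell has_derivative (\<lambda>K. K \<bullet> Gam M)) (at M)"
proof -
  define m4 where "m4 = (\<integral>xz. (fst xz \<bullet> fst xz)^2 \<partial>dm g)"
  define N where "N = real (CARD('n) * CARD('n))"
  have m4: "m4 \<ge> 0" unfolding m4_def by (intro integral_nonneg_AE) auto
  have N: "N \<ge> 0" unfolding N_def by simp
  have rem: "\<bar>ell (M + K) - ell M - K \<bullet> Gam M\<bar> \<le> (N^2 * m4) * (norm K * norm K)" for K
  proof -
    have "ell (M + K) - ell M - K \<bullet> Gam M = (\<integral>xz. (qf K (fst xz))^2 \<partial>dm g)" by (simp add: ell_expand)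
    also have "\<dots> \<le> (\<integral>xz. (mn K)^2 * (fst xz \<bullet> fst xz)^2 \<partial>dm g)"
    proof (rule integral_mono)
      show "integrable (dm g) (\<lambda>xz. (qf K (fst xz))^2)" by (rule int_qf_sq)
      show "integrable (dm g) (\<lambda>xz. (mn K)^2 * (fst xz \<bullet> fst xz)^2)" by (intro integrable_mult_right int_xx2)
      fix xz :: "(real^'n) \<times> real"
      have "(qf K (fst xz))^2 = \<bar>qf K (fst xz)\<bar>^2" by simp
      also have "\<dots> \<le> (mn K * (fst xz \<bullet> fst xz))^2" by (intro power_mono qf_bound) auto
      finally show "(qf K (fst xz))^2 \<le> (mn K)^2 * (fst xz \<bullet> fst xz)^2" by (simp add: power_mult_distrib)
    qed
    also have "\<dots> = (mn K)^2 * m4" unfolding m4_def by simp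
    also have "\<dots> \<le> (N * norm K)^2 * m4"
      using mn_le_norm[of K] mn_nonneg[of K] m4 unfolding N_def by (intro mult_right_mono power_mono) auto
    also have "\<dots> = (N^2 * m4) * (norm K * norm K)" by (simp add: power2_eq_square mult_ac)
    finally have le: "ell (M + K) - ell M - K \<bullet> Gam M \<le> (N^2 * m4) * (norm K * norm K)" .
    have ge: "ell (M + K) - ell M - K \<bullet> Gam M \<ge> 0"
      by (simp add: ell_expand)
    show ?thesis using le ge by simp
  qed
  show ?thesis unfolding has_derivative_at_alt
  proof (intro conjI allI impI)
    show "bounded_linear (\<lambda>K. K \<bullet> Gam M)" by (rule bounded_linear_inner_left)
    fix e :: real assume e: "e > 0"
    define d where "d = e / (N^2 * m4 + 1)"
    have pos: "N^2 * m4 + 1 > 0" using m4 by (simp add: add_nonneg_pos)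
    have dpos: "d > 0" using e pos unfolding d_def by simp
    show "\<exists>d>0. \<forall>y. norm (y - M) < d \<longrightarrow> norm (ell y - ell M - (y - M) \<bullet> Gam M) \<le> e * norm (y - M)"
    proof (intro exI conjI allI impI)
      show "d > 0" by (rule dpos)
      fix y assume y: "norm (y - M) < d"
      define K where "K = y - M"
      have yK: "y = M + K" unfolding K_def by simp
      have "norm (ell y - ell M - (y - M) \<bullet> Gam M) \<le> (N^2 * m4) * (norm K * norm K)"
        using rem[of K] unfolding yK by simp
      also have "\<dots> \<le> (N^2 * m4 + 1) * (norm K * norm K)"
        by (intro mult_right_mono) auto
      also have "\<dots> \<le> (N^2 * m4 + 1) * (d * norm K)"
        using y unfolding K_def[symmetric] using m4 by (intro mult_left_mono mult_right_mono) auto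
      also have "\<dots> = e * norm K" unfolding d_def using pos by simp
      finally show "norm (ell y - ell M - (y - M) \<bullet> Gam M) \<le> e * norm (y - M)" unfolding K_def .
    qed
  qed
qed

lemma P_gderiv: fixes W :: "real^'n^'n" shows "GDERIV (\<lambda>W. ell (W ** transpose W)) W :> 2 *\<^sub>R (Gam (W ** transpose W) ** W)"
proof -
  have "((\<lambda>W. ell (W ** transpose W)) has_derivative
        (\<lambda>H. (W ** transpose H + H ** transpose W) \<bullet> Gam (W ** transpose W))) (at W)"
  proof -
    have A: "((\<lambda>W. W ** transpose W) has_derivative (\<lambda>H. W ** transpose H + H ** transpose W)) (at W)"
      by (rule mmult_deriv)
    have B: "(ell has_derivative (\<lambda>K. K \<bullet> Gam (W ** transpose W))) (at (W ** transpose W))"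
      by (rule ell_deriv)
    show ?thesis using has_derivative_compose[OF A B] by simp
  qed
  moreover have "(W ** transpose H + H ** transpose W) \<bullet> Gam (W ** transpose W) = H \<bullet> (2 *\<^sub>R (Gam (W ** transpose W) ** W))" for H
  proof -
    let ?G = "Gam (W ** transpose W)"
    have a: "(H ** transpose W) \<bullet> ?G = H \<bullet> (?G ** W)" by (rule inner_mmult_A)
    have b: "(W ** transpose H) \<bullet> ?G = H \<bullet> (?G ** W)" using inner_mmult_B[of W H ?G] by (simp add: Gam_sym)
    show ?thesis by (simp add: inner_add_left a b)
  qed
  ultimately show ?thesis unfolding gderiv_def by simp
qed

lemma gderiv_unique: "GDERIV f x :> D \<Longrightarrow> GDERIV f x :> E \<Longrightarrow> D = E"
  for f :: "real^'n^'n \<Rightarrow> real"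
proof -
  assume "GDERIV f x :> D" "GDERIV f x :> E"
  then have "(\<lambda>h. h \<bullet> D) = (\<lambda>h. h \<bullet> E)" unfolding gderiv_def by (rule has_derivative_unique)
  then have "(D - E) \<bullet> D = (D - E) \<bullet> E" by metis
  then have "(D - E) \<bullet> (D - E) = 0" by (simp add: inner_diff_right)
  then show "D = E" by simp
qed

lemma P_grad: fixes W :: "real^'n^'n" shows "grad (\<lambda>W. ell (W ** transpose W)) W = 2 *\<^sub>R (Gam (W ** transpose W) ** W)"
  unfolding grad_def using P_gderiv gderiv_unique by blast

end

lemma refl_inner_sym: "refl u x \<bullet> a = x \<bullet> refl u a"
  by (simp add: refl_def inner_diff_left inner_diff_right inner_commute)

lemma refl_refl_inner: "norm u = 1 \<Longrightarrow> refl u x \<bullet> refl u a = x \<bullet> a"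
  by (simp add: refl_inner_sym refl_invol)

lemma inner_mulv_sym: "a \<bullet> (G *v b) = (transpose G *v a) \<bullet> (b::real^'n::finite)"
  for G :: "real^'n^'n"
proof -
  have "a \<bullet> (G *v b) = (\<Sum>i\<in>UNIV. \<Sum>j\<in>UNIV. a $ i * G $ i $ j * b $ j)"
    by (simp add: inner_vec_def matrix_vector_mult_def sum_distrib_left mult_ac)
  also have "\<dots> = (\<Sum>j\<in>UNIV. \<Sum>i\<in>UNIV. a $ i * G $ i $ j * b $ j)" by (rule sum.swap)
  also have "\<dots> = (transpose G *v a) \<bullet> b"
    by (simp add: inner_vec_def matrix_vector_mult_def transpose_def sum_distrib_right sum_distrib_left mult_ac)
  finally show ?thesis .
qed

context gs begin

lemma Gam_eig:
  assumes u: "norm u = 1" and ginv: "\<And>x. g (refl u x) = g x"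
    and wi: "\<And>x. (refl u x \<bullet> w)^2 = (x \<bullet> w)^2" and Mi: "\<And>x. qf M (refl u x) = qf M x"
  shows "Gam M *v u = (u \<bullet> (Gam M *v u)) *\<^sub>R u"
proof -
  have erinv: "er M (refl u (fst xz), snd xz) = er M xz" for xz
    by (simp add: er_def Y_def wi Mi)
  have B: "a \<bullet> (Gam M *v c) = refl u a \<bullet> (Gam M *v refl u c)" for a c
  proof -
    define F where "F xz = er M xz * ((fst xz \<bullet> refl u a) * (fst xz \<bullet> refl u c))" for xz
    have Fm: "F \<in> borel_measurable (borel \<Otimes>\<^sub>M borel)" unfolding F_def by measurable
    have "refl u a \<bullet> (Gam M *v refl u c) = -2 * (\<integral>xz. F xz \<partial>dm g)" by (simp add: Gam_bil F_def)
    also have "(\<integral>xz. F xz \<partial>dm g) = (\<integral>xz. F (refl u (fst xz), snd xz) \<partial>dm g)"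
      by (rule dm_refl[OF gm ginv u Fm, symmetric])
    also have "(\<lambda>xz. F (refl u (fst xz), snd xz)) = (\<lambda>xz. er M xz * ((fst xz \<bullet> a) * (fst xz \<bullet> c)))"
      by (simp add: F_def erinv refl_refl_inner[OF u])
    finally show ?thesis by (simp add: Gam_bil)
  qed
  have uu: "u \<bullet> u = 1" using u by (simp add: power2_norm_eq_inner[symmetric])
  have ru: "refl u u = - u" unfolding refl_def uu by (simp add: scaleR_2)
  have key: "a \<bullet> (Gam M *v u) = (u \<bullet> a) * (u \<bullet> (Gam M *v u))" for a
  proof -
    have ra: "refl u a = a - (2 * (u \<bullet> a)) *\<^sub>R u" by (simp add: refl_def)
    have "a \<bullet> (Gam M *v u) = (a - (2 * (u \<bullet> a)) *\<^sub>R u) \<bullet> (Gam M *v (- u))"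
      using B[of a u] by (simp only: ru ra)
    also have "\<dots> = (a - (2 * (u \<bullet> a)) *\<^sub>R u) \<bullet> (- (Gam M *v u))" by (simp only: vec.neg)
    finally have "a \<bullet> (Gam M *v u) = (a - (2 * (u \<bullet> a)) *\<^sub>R u) \<bullet> (- (Gam M *v u))" .
    then show ?thesis by (simp add: inner_diff_left algebra_simps)
  qed
  show ?thesis
  proof (subst vec_eq_iff, intro allI)
    fix i
    have "(Gam M *v u) $ i = axis i 1 \<bullet> (Gam M *v u)" by (simp add: inner_axis')
    also have "\<dots> = (u \<bullet> axis i 1) * (u \<bullet> (Gam M *v u))" by (rule key)
    finally show "(Gam M *v u) $ i = ((u \<bullet> (Gam M *v u)) *\<^sub>R u) $ i" by (simp add: inner_axis)
  qed
qed

end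

lemma outer_mulv: "outer a b *v x = (b \<bullet> x) *\<^sub>R a"
  by (simp add: outer_def matrix_vector_mult_def vec_eq_iff inner_vec_def sum_distrib_left mult_ac)

lemma transpose_outer: "transpose (outer a b) = outer b a"
  by (simp add: outer_def transpose_def vec_eq_iff)

lemma transpose_add: "transpose (A + B) = transpose A + transpose (B::real^'n::finite^'m::finite)"
  by (simp add: transpose_def vec_eq_iff)

lemma transpose_diff: "transpose (A - B) = transpose A - transpose (B::real^'n::finite^'m::finite)"
  by (simp add: transpose_def vec_eq_iff)

lemma mmult_diff_r: "(A - B) ** C = A ** C - B ** (C::real^'p::finite^'n::finite)"
  for A B :: "real^'n^'m::finite"
  by (vector matrix_matrix_mult_def sum_subtractf[symmetric] field_simps)

lemma mmult_diff_l: "C ** (A - B) = C ** A - C ** (B::real^'p::finite^'n::finite)"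
  for C :: "real^'n^'m::finite"
  by (vector matrix_matrix_mult_def sum_subtractf[symmetric] field_simps)

lemma psd_inner_sym: "psd R \<Longrightarrow> a \<bullet> (R *v b) = b \<bullet> (R *v a)"
  unfolding psd_def using inner_mulv_sym[of a R b] by (simp add: inner_commute)

lemma psd_null:
  assumes R: "psd R" and y: "y \<bullet> (R *v y) = 0"
  shows "R *v y = 0"
proof (rule ccontr)
  assume ne: "R *v y \<noteq> 0"
  define z where "z = R *v y"
  define s where "s = z \<bullet> z"
  define q where "q = z \<bullet> (R *v z)"
  have s: "s > 0" using ne unfolding s_def z_def by simp
  have q: "q \<ge> 0" using R unfolding q_def psd_def by simp
  define t where "t = s / (q + 1)"
  have t: "t > 0" using s q unfolding t_def by simp
  have "0 \<le> (y - t *\<^sub>R z) \<bullet> (R *v (y - t *\<^sub>R z))" using R unfolding psd_def by simp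
  also have "\<dots> = y \<bullet> (R *v y) - t * (y \<bullet> (R *v z)) - t * (z \<bullet> (R *v y)) + t * t * q"
    by (simp add: vec.diff vec.scale inner_diff_left inner_diff_right q_def algebra_simps)
  also have "y \<bullet> (R *v z) = z \<bullet> (R *v y)" by (rule psd_inner_sym[OF R])
  also have "z \<bullet> (R *v y) = s" unfolding s_def z_def ..
  finally have "0 \<le> - 2 * t * s + t * t * q" using y by (simp add: mult_ac)
  then have "t * (2 * s) \<le> t * (t * q)" by (simp add: algebra_simps)
  then have "2 * s \<le> t * q" using mult_le_cancel_left_pos[OF t] by blast
  also have "t * q = s * (q / (q + 1))" unfolding t_def using q by (simp add: field_simps)
  also have "\<dots> \<le> s * 1" using q s by (intro mult_left_mono) auto
  finally show False using s by simp
qed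

lemma trace_quad:
  fixes D A :: "real^'n::finite^'n"
  assumes "transpose D = D"
  shows "trace (D ** A ** D) = (\<Sum>k\<in>UNIV. (D *v axis k 1) \<bullet> (A *v (D *v axis k 1)))"
proof -
  have Dk: "(D *v axis k 1) $ i = D $ k $ i" for k i
    using assms by (simp add: matrix_vector_mult_def axis_def transpose_def vec_eq_iff if_distrib cong: if_cong)
  have col: "D *v axis k 1 = D $ k" for k using Dk by (simp add: vec_eq_iff)
  have Ds: "D $ n $ k = D $ k $ n" for n k using assms by (metis transpose_def vec_lambda_beta)
  have "trace (D ** A ** D) = (\<Sum>k\<in>UNIV. \<Sum>n\<in>UNIV. \<Sum>i\<in>UNIV. D $ k $ i * A $ i $ n * D $ k $ n)"
    unfolding trace_def by (simp add: matrix_matrix_mult_def sum_distrib_right Ds)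
  also have "\<dots> = (\<Sum>k\<in>UNIV. \<Sum>i\<in>UNIV. \<Sum>n\<in>UNIV. D $ k $ i * A $ i $ n * D $ k $ n)"
    by (rule sum.cong[OF refl], rule sum.swap)
  also have "\<dots> = (\<Sum>k\<in>UNIV. (D *v axis k 1) \<bullet> (A *v (D *v axis k 1)))"
    unfolding col by (simp add: inner_vec_def matrix_vector_mult_def sum_distrib_left mult_ac)
  finally show ?thesis .
qed

lemma psd_unique:
  fixes R S :: "real^'n::finite^'n"
  assumes R: "psd R" and S: "psd S" and eq: "R ** R = S ** S"
  shows "R = S"
proof -
  define D where "D = R - S"
  have Rs: "transpose R = R" and Ss: "transpose S = S" using R S by (auto simp: psd_def)
  have Ds: "transpose D = D" unfolding D_def by (simp add: transpose_diff Rs Ss)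
  have RD: "R ** D + D ** S = 0"
    unfolding D_def by (simp add: mmult_diff_l mmult_diff_r eq)
  have "trace (D ** R ** D) + trace (D ** S ** D) = trace (D ** R ** D) + trace (D ** D ** S)"
  proof -
    have "trace (D ** D ** S) = trace (D ** (D ** S))" by (simp add: matrix_mul_assoc)
    also have "\<dots> = trace ((D ** S) ** D)" by (rule trace_mul_sym)
    finally show ?thesis by simp
  qed
  also have "\<dots> = trace (D ** (R ** D + D ** S))"
    by (simp add: matrix_add_ldistrib trace_add matrix_mul_assoc)
  also have "\<dots> = 0" by (simp add: RD trace_def)
  finally have tr0: "trace (D ** R ** D) + trace (D ** S ** D) = 0" .
  define c where "c k = D *v axis k 1" for k
  have t1: "trace (D ** R ** D) = (\<Sum>k\<in>UNIV. c k \<bullet> (R *v c k))" unfolding c_def by (rule trace_quad[OF Ds])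
  have t2: "trace (D ** S ** D) = (\<Sum>k\<in>UNIV. c k \<bullet> (S *v c k))" unfolding c_def by (rule trace_quad[OF Ds])
  have n1: "c k \<bullet> (R *v c k) \<ge> 0" for k using R by (simp add: psd_def)
  have n2: "c k \<bullet> (S *v c k) \<ge> 0" for k using S by (simp add: psd_def)
  have s1: "(\<Sum>k\<in>UNIV. c k \<bullet> (R *v c k)) = 0" and s2: "(\<Sum>k\<in>UNIV. c k \<bullet> (S *v c k)) = 0"
    using tr0 t1 t2 sum_nonneg[of UNIV "\<lambda>k. c k \<bullet> (R *v c k)"] sum_nonneg[of UNIV "\<lambda>k. c k \<bullet> (S *v c k)"] n1 n2
    by auto
  have z1: "c k \<bullet> (R *v c k) = 0" for k using s1 n1 by (simp add: sum_nonneg_eq_0_iff)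
  have z2: "c k \<bullet> (S *v c k) = 0" for k using s2 n2 by (simp add: sum_nonneg_eq_0_iff)
  have Dc: "D *v c k = 0" for k
    using psd_null[OF R z1[of k]] psd_null[OF S z2[of k]] unfolding D_def by (simp add: matrix_vector_mult_diff_rdistrib)
  have "c k \<bullet> c k = 0" for k
  proof -
    have "axis k 1 \<bullet> (D *v c k) = (transpose D *v axis k 1) \<bullet> c k" by (rule inner_mulv_sym)
    then have "axis k 1 \<bullet> (D *v c k) = c k \<bullet> c k" unfolding Ds by (simp add: c_def)
    then show ?thesis using Dc[of k] by simp
  qed
  then have "c k = 0" for k by simp
  then have "D = 0"
    unfolding c_def by (simp add: vec_eq_iff matrix_vector_mult_def axis_def if_distrib cong: if_cong)
  then show ?thesis unfolding D_def by simp
qed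

lemma pinv_unique:
  fixes S X Y :: "real^'n::finite^'n"
  assumes X1: "S ** X ** S = S" and X2: "X ** S ** X = X"
    and X3: "transpose (S ** X) = S ** X" and X4: "transpose (X ** S) = X ** S"
    and Y1: "S ** Y ** S = S" and Y2: "Y ** S ** Y = Y"
    and Y3: "transpose (S ** Y) = S ** Y" and Y4: "transpose (Y ** S) = Y ** S"
  shows "X = Y"
proof -
  have a: "X = X ** S ** Y"
  proof -
    have "X = X ** (S ** X)" using X2 by (simp add: matrix_mul_assoc)
    also have "\<dots> = X ** transpose (S ** X)" by (simp add: X3)
    also have "\<dots> = X ** (transpose X ** transpose S)" by (simp add: matrix_transpose_mul)
    also have "transpose S = transpose (S ** Y ** S)" by (simp add: Y1)
    also have "\<dots> = transpose S ** transpose (S ** Y)" by (simp add: matrix_transpose_mul)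
    also have "X ** (transpose X ** (transpose S ** transpose (S ** Y))) = X ** (transpose (S ** X) ** transpose (S ** Y))"
      by (simp add: matrix_transpose_mul matrix_mul_assoc)
    also have "\<dots> = X ** ((S ** X) ** (S ** Y))" by (simp add: X3 Y3)
    also have "\<dots> = (X ** S ** X) ** S ** Y" by (simp add: matrix_mul_assoc)
    also have "\<dots> = X ** S ** Y" by (simp add: X2)
    finally show ?thesis .
  qed
  have b: "Y = X ** S ** Y"
  proof -
    have "Y = (Y ** S) ** Y" using Y2 by simp
    also have "\<dots> = transpose (Y ** S) ** Y" by (simp add: Y4)
    also have "\<dots> = (transpose S ** transpose Y) ** Y" by (simp add: matrix_transpose_mul)
    also have "transpose S = transpose (S ** X ** S)" by (simp add: X1)
    also have "\<dots> = transpose (X ** S) ** transpose S" by (simp add: matrix_transpose_mul matrix_mul_assoc)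
    also have "((transpose (X ** S) ** transpose S) ** transpose Y) ** Y = (transpose (X ** S) ** transpose (Y ** S)) ** Y"
      by (simp add: matrix_transpose_mul matrix_mul_assoc)
    also have "\<dots> = ((X ** S) ** (Y ** S)) ** Y" by (simp add: X4 Y4)
    also have "\<dots> = X ** S ** (Y ** S ** Y)" by (simp add: matrix_mul_assoc)
    also have "\<dots> = X ** S ** Y" by (simp add: Y2)
    finally show ?thesis .
  qed
  show ?thesis using a b by simp
qed

lemma mmt_zero:
  fixes B :: "real^'n::finite^'m::finite"
  assumes "B ** transpose B = 0"
  shows "B = 0"
proof -
  have "(\<Sum>j\<in>UNIV. (B $ i $ j)^2) = 0" for i
    using arg_cong[OF assms, of "\<lambda>M. M $ i $ i"]
    by (simp add: matrix_matrix_mult_def transpose_def power2_eq_square)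
  then have "B $ i $ j = 0" for i j
    using sum_nonneg_eq_0_iff[of UNIV "\<lambda>j. (B $ i $ j)^2"] by simp
  then show ?thesis by (simp add: vec_eq_iff)
qed

locale onb =
  fixes w v :: "real^'n::finite"
  assumes ww: "w \<bullet> w = 1" and vv: "v \<bullet> v = 1" and vw: "v \<bullet> w = 0"
begin

lemma wv: "w \<bullet> v = 0" using vw by (simp add: inner_commute)

definition DD :: "real \<Rightarrow> real \<Rightarrow> real \<Rightarrow> real^'n^'n" where
  "DD a b c = a *\<^sub>R outer w w + b *\<^sub>R outer v v + c *\<^sub>R (mat 1 - outer w w - outer v v)"

definition rr :: "real^'n \<Rightarrow> real^'n" where "rr x = x - (w \<bullet> x) *\<^sub>R w - (v \<bullet> x) *\<^sub>R v"

lemma rr_w: "w \<bullet> rr x = 0" by (simp add: rr_def inner_diff_right ww wv)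
lemma rr_v: "v \<bullet> rr x = 0" by (simp add: rr_def inner_diff_right vv vw)
lemma rr_decomp: "x = (w \<bullet> x) *\<^sub>R w + (v \<bullet> x) *\<^sub>R v + rr x" by (simp add: rr_def)

lemma DD_mulv: "DD a b c *v x = (a * (w \<bullet> x)) *\<^sub>R w + (b * (v \<bullet> x)) *\<^sub>R v + c *\<^sub>R rr x"
  by (simp add: DD_def rr_def matrix_vector_mult_add_rdistrib matrix_vector_mult_diff_rdistrib
      scaleR_matrix_vector_assoc[symmetric] outer_mulv)

lemma DD_w: "w \<bullet> (DD a b c *v x) = a * (w \<bullet> x)"
  by (simp add: DD_mulv inner_add_right rr_w ww wv)
lemma DD_v: "v \<bullet> (DD a b c *v x) = b * (v \<bullet> x)"
  by (simp add: DD_mulv inner_add_right rr_v vv vw)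
lemma DD_rr: "rr (DD a b c *v x) = c *\<^sub>R rr x"
proof -
  have "rr (DD a b c *v x) = DD a b c *v x - (a * (w \<bullet> x)) *\<^sub>R w - (b * (v \<bullet> x)) *\<^sub>R v"
    by (simp add: rr_def DD_w DD_v)
  then show ?thesis by (simp add: DD_mulv)
qed

lemma DD_eqI: "(\<And>x. G *v x = DD a b c *v x) \<Longrightarrow> G = DD a b c"
  by (simp add: matrix_eq)

lemma DD_mult: "DD a b c ** DD a' b' c' = DD (a * a') (b * b') (c * c')"
proof (rule DD_eqI)
  fix x
  have "(DD a b c ** DD a' b' c') *v x = DD a b c *v (DD a' b' c' *v x)" by (simp add: matrix_vector_mul_assoc)
  also have "\<dots> = DD (a * a') (b * b') (c * c') *v x"
  proof -
    have "DD a b c *v (DD a' b' c' *v x) = (a * (a' * (w \<bullet> x))) *\<^sub>R w + (b * (b' * (v \<bullet> x))) *\<^sub>R v + c *\<^sub>R (c' *\<^sub>R rr x)"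
      by (simp only: DD_mulv[of a b c "DD a' b' c' *v x"] DD_w DD_v DD_rr)
    then show ?thesis by (simp add: DD_mulv mult.assoc)
  qed
  finally show "(DD a b c ** DD a' b' c') *v x = DD (a * a') (b * b') (c * c') *v x" .
qed

lemma DD_add: "DD a b c + DD a' b' c' = DD (a + a') (b + b') (c + c')"
  by (simp add: DD_def algebra_simps)

lemma DD_one: "DD 1 1 1 = mat 1" by (simp add: DD_def)

lemma DD_zero: "DD 0 0 0 = 0" by (simp add: DD_def)

lemma DD_transpose: "transpose (DD a b c) = DD a b c"
  by (simp add: DD_def transpose_add transpose_diff transpose_scalar transpose_outer transpose_mat)

lemma DD_quad: "x \<bullet> (DD a b c *v x) = a * (w \<bullet> x)^2 + b * (v \<bullet> x)^2 + c * (rr x \<bullet> rr x)"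
proof -
  have xr: "x \<bullet> rr x = rr x \<bullet> rr x"
  proof -
    have "rr x \<bullet> rr x = (x - (w \<bullet> x) *\<^sub>R w - (v \<bullet> x) *\<^sub>R v) \<bullet> rr x" by (simp add: rr_def)
    also have "\<dots> = x \<bullet> rr x" by (simp add: inner_diff_left rr_w rr_v)
    finally show ?thesis by simp
  qed
  show ?thesis by (simp add: DD_mulv inner_add_right xr power2_eq_square inner_commute)
qed

lemma DD_psd: "a \<ge> 0 \<Longrightarrow> b \<ge> 0 \<Longrightarrow> c \<ge> 0 \<Longrightarrow> psd (DD a b c)"
  unfolding psd_def by (simp add: DD_transpose DD_quad)

lemma qf_DD: "qf (DD a b c) x = a * (w \<bullet> x)^2 + b * (v \<bullet> x)^2 + c * (x \<bullet> x - (w \<bullet> x)^2 - (v \<bullet> x)^2)"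
proof -
  have "rr x \<bullet> rr x = x \<bullet> x - (w \<bullet> x)^2 - (v \<bullet> x)^2"
    by (simp add: rr_def inner_diff_left inner_diff_right ww vv vw wv inner_commute power2_eq_square algebra_simps)
  then show ?thesis by (simp add: qf_def DD_quad)
qed

lemma eig_eq:
  fixes G :: "real^'n^'n" and p q :: "real^'n"
  assumes sym: "transpose G = G" and a: "G *v p = c *\<^sub>R p" and b: "G *v q = d *\<^sub>R q" and pq: "p \<bullet> q \<noteq> 0"
  shows "c = d"
proof -
  have "p \<bullet> (G *v q) = (transpose G *v p) \<bullet> q" by (rule inner_mulv_sym)
  then have "d * (p \<bullet> q) = c * (p \<bullet> q)" using sym a b by (simp add: inner_commute)
  then show ?thesis using pq by simp
qed

lemma DD_structure:
  fixes G :: "real^'n^'n"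
  assumes sym: "transpose G = G" and ew: "G *v w = \<alpha> *\<^sub>R w" and ev: "G *v v = \<beta> *\<^sub>R v"
    and ep: "\<And>p. p \<noteq> 0 \<Longrightarrow> w \<bullet> p = 0 \<Longrightarrow> v \<bullet> p = 0 \<Longrightarrow> \<exists>c. G *v p = c *\<^sub>R p"
  shows "\<exists>\<gamma>. G = DD \<alpha> \<beta> \<gamma>"
proof -
  obtain \<gamma> where g\<gamma>: "\<And>p. w \<bullet> p = 0 \<Longrightarrow> v \<bullet> p = 0 \<Longrightarrow> G *v p = \<gamma> *\<^sub>R p"
  proof (cases "\<exists>p0. p0 \<noteq> 0 \<and> w \<bullet> p0 = 0 \<and> v \<bullet> p0 = 0")
    case False
    have "G *v p = 0 *\<^sub>R p" if "w \<bullet> p = 0" "v \<bullet> p = 0" for p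
      using False that by (cases "p = 0") auto
    then show ?thesis using that[of 0] by blast
  next
    case True
    then obtain p0 where p0: "p0 \<noteq> 0" "w \<bullet> p0 = 0" "v \<bullet> p0 = 0" by blast
    obtain \<gamma> where G0: "G *v p0 = \<gamma> *\<^sub>R p0" using ep[OF p0] by blast
    have "G *v p = \<gamma> *\<^sub>R p" if pw: "w \<bullet> p = 0" and pv: "v \<bullet> p = 0" for p
    proof (cases "p = 0")
      case True then show ?thesis by simp
    next
      case False
      obtain c where Gp: "G *v p = c *\<^sub>R p" using ep[OF False pw pv] by blast
      have "c = \<gamma>"
      proof (cases "p \<bullet> p0 = 0")
        case False
        then show ?thesis using eig_eq[OF sym Gp G0] by simp
      next
        case True
        define q where "q = p + p0"
        have qp0: "q \<bullet> p0 \<noteq> 0" using True p0 by (simp add: q_def inner_add_left)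
        have qp: "q \<bullet> p \<noteq> 0" using True \<open>p \<noteq> 0\<close> by (simp add: q_def inner_add_left inner_commute[of p0 p])
        have "q \<noteq> 0" using qp0 by auto
        moreover have "w \<bullet> q = 0" "v \<bullet> q = 0" using pw pv p0 by (simp_all add: q_def inner_add_right)
        ultimately obtain c' where Gq: "G *v q = c' *\<^sub>R q" using ep by blast
        have "c' = c" using eig_eq[OF sym Gq Gp qp] .
        moreover have "c' = \<gamma>" using eig_eq[OF sym Gq G0 qp0] .
        ultimately show ?thesis by simp
      qed
      then show ?thesis using Gp by simp
    qed
    then show ?thesis using that by blast
  qed
  have "G = DD \<alpha> \<beta> \<gamma>"
  proof (rule DD_eqI)
    fix x
    have "G *v x = G *v ((w \<bullet> x) *\<^sub>R w + (v \<bullet> x) *\<^sub>R v + rr x)" using rr_decomp[of x] by simp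
    also have "\<dots> = (w \<bullet> x) *\<^sub>R (G *v w) + (v \<bullet> x) *\<^sub>R (G *v v) + G *v rr x"
      by (simp add: matrix_vector_right_distrib matrix_scaleR_vector_ac scaleR_matrix_vector_assoc)
    also have "\<dots> = DD \<alpha> \<beta> \<gamma> *v x" using g\<gamma>[OF rr_w rr_v] by (simp add: ew ev DD_mulv mult.commute)
    finally show "G *v x = DD \<alpha> \<beta> \<gamma> *v x" .
  qed
  then show ?thesis by blast
qed

end

definition hf :: "real \<Rightarrow> real" where "hf s = (if s > 0 then 1 / sqrt s else 0)"

lemma hf_props:
  assumes s: "s \<ge> 0"
  shows "hf s \<ge> 0"
    and "(hf s * s * (hf s * hf s * hf s)) * s * hf s = hf s"
    and "((hf s * hf s * hf s) * s * hf s) * s * (hf s * hf s * hf s) = hf s * hf s * hf s"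
    and "s * (hf s * hf s * hf s) = hf s"
    and "(1 - hf s * s * hf s) * s * (1 - hf s * s * hf s) = 0"
proof -
  show "hf s \<ge> 0" by (simp add: hf_def)
  have key: "hf s * hf s * s = (if s > 0 then 1 else 0)"
  proof (cases "s > 0")
    case True
    then have "sqrt s * sqrt s = s" by (simp add: real_sqrt_mult_self)
    then show ?thesis using True by (simp add: hf_def field_simps)
  qed (simp add: hf_def)
  have z: "s = 0 \<Longrightarrow> hf s = 0" by (simp add: hf_def)
  show "(hf s * s * (hf s * hf s * hf s)) * s * hf s = hf s"
  proof -
    have "(hf s * s * (hf s * hf s * hf s)) * s * hf s = (hf s * hf s * s) * (hf s * hf s * s) * hf s"
      by (simp add: mult_ac)
    then show ?thesis using key z s by (cases "s > 0") auto
  qed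
  show "((hf s * hf s * hf s) * s * hf s) * s * (hf s * hf s * hf s) = hf s * hf s * hf s"
  proof -
    have "((hf s * hf s * hf s) * s * hf s) * s * (hf s * hf s * hf s) = (hf s * hf s * s) * (hf s * hf s * s) * (hf s * hf s * hf s)"
      by (simp add: mult_ac)
    then show ?thesis using key z s by (cases "s > 0") auto
  qed
  show "s * (hf s * hf s * hf s) = hf s"
  proof -
    have "s * (hf s * hf s * hf s) = (hf s * hf s * s) * hf s" by (simp add: mult_ac)
    then show ?thesis using key z s by (cases "s > 0") auto
  qed
  show "(1 - hf s * s * hf s) * s * (1 - hf s * s * hf s) = 0"
  proof -
    have "hf s * s * hf s = hf s * hf s * s" by (simp add: mult_ac)
    then show ?thesis using key s by (cases "s > 0") auto
  qed
qed

context onb begin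

lemma prodrule:
  fixes A :: "real^'n^'n"
  assumes AA: "A ** transpose A = DD s1 s2 s3"
  shows "(transpose A ** DD f1 f2 f3 ** A) ** (transpose A ** DD k1 k2 k3 ** A)
       = transpose A ** DD (f1 * s1 * k1) (f2 * s2 * k2) (f3 * s3 * k3) ** A"
proof -
  have "(transpose A ** DD f1 f2 f3 ** A) ** (transpose A ** DD k1 k2 k3 ** A)
      = transpose A ** (DD f1 f2 f3 ** ((A ** transpose A) ** DD k1 k2 k3)) ** A"
    by (simp add: matrix_mul_assoc)
  also have "\<dots> = transpose A ** DD (f1 * s1 * k1) (f2 * s2 * k2) (f3 * s3 * k3) ** A"
    by (simp add: AA DD_mult mult.assoc)
  finally show ?thesis .
qed

lemma symform: "transpose (transpose A ** DD f1 f2 f3 ** A) = transpose A ** DD f1 f2 f3 ** A"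
  for A :: "real^'n^'n"
  by (simp add: matrix_transpose_mul DD_transpose matrix_mul_assoc)

lemma psdform:
  fixes A :: "real^'n^'n"
  assumes "f1 \<ge> 0" "f2 \<ge> 0" "f3 \<ge> 0"
  shows "psd (transpose A ** DD f1 f2 f3 ** A)"
  unfolding psd_def
proof (intro conjI allI)
  show "transpose (transpose A ** DD f1 f2 f3 ** A) = transpose A ** DD f1 f2 f3 ** A" by (rule symform)
  fix x
  have "x \<bullet> ((transpose A ** DD f1 f2 f3 ** A) *v x) = x \<bullet> (transpose A *v (DD f1 f2 f3 *v (A *v x)))"
    by (simp add: matrix_vector_mul_assoc matrix_mul_assoc)
  also have "\<dots> = (A *v x) \<bullet> (DD f1 f2 f3 *v (A *v x))"
    using inner_mulv_sym[of x "transpose A" "DD f1 f2 f3 *v (A *v x)"] by simp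
  also have "\<dots> \<ge> 0" using DD_psd[OF assms] unfolding psd_def by blast
  finally show "0 \<le> x \<bullet> ((transpose A ** DD f1 f2 f3 ** A) *v x)" .
qed

lemma polar_DD:
  fixes A :: "real^'n^'n"
  assumes AA: "A ** transpose A = DD s1 s2 s3" and s: "s1 \<ge> 0" "s2 \<ge> 0" "s3 \<ge> 0"
  shows "polar A = DD (hf s1) (hf s2) (hf s3) ** A"
proof -
  let ?h1 = "hf s1" and ?h2 = "hf s2" and ?h3 = "hf s3"
  define S0 where "S0 = transpose A ** DD ?h1 ?h2 ?h3 ** A"
  define X0 where "X0 = transpose A ** DD (?h1 * ?h1 * ?h1) (?h2 * ?h2 * ?h2) (?h3 * ?h3 * ?h3) ** A"
  note h1 = hf_props[OF s(1)] and h2 = hf_props[OF s(2)] and h3 = hf_props[OF s(3)]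
  define t1 where "t1 = 1 - ?h1 * s1 * ?h1"
  define t2 where "t2 = 1 - ?h2 * s2 * ?h2"
  define t3 where "t3 = 1 - ?h3 * s3 * ?h3"
  have Bz: "transpose A ** DD t1 t2 t3 ** A = 0"
  proof -
    define B where "B = DD t1 t2 t3 ** A"
    have "B ** transpose B = DD t1 t2 t3 ** (A ** transpose A) ** DD t1 t2 t3"
      by (simp add: B_def matrix_transpose_mul DD_transpose matrix_mul_assoc)
    also have "\<dots> = 0"
      by (simp only: AA DD_mult t1_def t2_def t3_def h1(5) h2(5) h3(5) DD_zero)
    finally have "B = 0" by (rule mmt_zero)
    have t0: "transpose (0::real^'n^'n) = 0" by (simp add: transpose_def vec_eq_iff)
    from \<open>B = 0\<close> have "transpose B ** A = 0" by (simp add: t0)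
    then show ?thesis by (simp add: B_def matrix_transpose_mul DD_transpose)
  qed
  have sq: "S0 ** S0 = transpose A ** A"
  proof -
    have "S0 ** S0 = transpose A ** DD (?h1 * s1 * ?h1) (?h2 * s2 * ?h2) (?h3 * s3 * ?h3) ** A"
      unfolding S0_def by (rule prodrule[OF AA])
    also have "\<dots> = transpose A ** DD (?h1 * s1 * ?h1) (?h2 * s2 * ?h2) (?h3 * s3 * ?h3) ** A
                     + transpose A ** DD t1 t2 t3 ** A" by (simp add: Bz)
    also have "\<dots> = transpose A ** (DD (?h1 * s1 * ?h1) (?h2 * s2 * ?h2) (?h3 * s3 * ?h3) + DD t1 t2 t3) ** A"
      by (simp only: mmult_add_r[symmetric] matrix_add_ldistrib[symmetric])
    also have "\<dots> = transpose A ** DD 1 1 1 ** A"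
      by (simp add: DD_add t1_def t2_def t3_def)
    also have "\<dots> = transpose A ** A" by (simp add: DD_one)
    finally show ?thesis .
  qed
  have psdS0: "psd S0" unfolding S0_def by (rule psdform) (simp_all add: h1(1) h2(1) h3(1))
  have sqrt: "psd_sqrt (transpose A ** A) = S0"
    unfolding psd_sqrt_def
  proof (rule the_equality)
    show "psd S0 \<and> S0 ** S0 = transpose A ** A" using psdS0 sq by simp
    fix R assume "psd R \<and> R ** R = transpose A ** A"
    then show "R = S0" using psd_unique[of R S0] psdS0 sq by simp
  qed
  have e1: "S0 ** X0 ** S0 = S0"
    unfolding S0_def X0_def by (simp add: prodrule[OF AA] h1(2) h2(2) h3(2))
  have e2: "X0 ** S0 ** X0 = X0"
    unfolding S0_def X0_def by (simp add: prodrule[OF AA] h1(3) h2(3) h3(3))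
  have e3: "transpose (S0 ** X0) = S0 ** X0"
    unfolding S0_def X0_def by (simp only: prodrule[OF AA] symform)
  have e4: "transpose (X0 ** S0) = X0 ** S0"
    unfolding S0_def X0_def by (simp only: prodrule[OF AA] symform)
  have pinv: "pinv S0 = X0"
    unfolding pinv_def
  proof (rule the_equality)
    show "S0 ** X0 ** S0 = S0 \<and> X0 ** S0 ** X0 = X0 \<and> transpose (S0 ** X0) = S0 ** X0 \<and> transpose (X0 ** S0) = X0 ** S0"
      using e1 e2 e3 e4 by simp
    fix X assume "S0 ** X ** S0 = S0 \<and> X ** S0 ** X = X \<and> transpose (S0 ** X) = S0 ** X \<and> transpose (X ** S0) = X ** S0"
    then show "X = X0" using pinv_unique[of S0 X X0] e1 e2 e3 e4 by blast
  qed
  have "polar A = A ** X0" unfolding polar_def sqrt pinv ..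
  also have "\<dots> = (A ** transpose A) ** DD (?h1 * ?h1 * ?h1) (?h2 * ?h2 * ?h2) (?h3 * ?h3 * ?h3) ** A"
    unfolding X0_def by (simp add: matrix_mul_assoc)
  also have "\<dots> = DD ?h1 ?h2 ?h3 ** A" by (simp add: AA DD_mult h1(4) h2(4) h3(4))
  finally show ?thesis .
qed

end

lemma sum_column_sq: "(\<Sum>j\<in>UNIV. (column j W \<bullet> x)^2) = qf (W ** transpose W) x"
  for W :: "real^'n::finite^'n"
proof -
  have cj: "column j W \<bullet> x = (transpose W *v x) $ j" for j
    by (simp add: column_def transpose_def matrix_vector_mult_def inner_vec_def mult_ac)
  have "qf (W ** transpose W) x = x \<bullet> (W *v (transpose W *v x))"
    by (simp only: qf_def matrix_vector_mul_assoc)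
  also have "\<dots> = (transpose W *v x) \<bullet> (transpose W *v x)" by (rule inner_mulv_sym)
  also have "\<dots> = (\<Sum>j\<in>UNIV. ((transpose W *v x) $ j)^2)" by (rule inner_self_cart)
  finally show ?thesis by (simp add: cj)
qed

lemma Qinv:
  fixes v :: "real^'n::finite" and lam :: real
  assumes vv: "v \<bullet> v = 1" and lam: "lam > 0"
  shows "matrix_inv (mat 1 + lam *\<^sub>R outer v v) = mat 1 - (lam / (1 + lam)) *\<^sub>R outer v v"
proof -
  define Q where "Q = mat 1 + lam *\<^sub>R outer v v"
  define Qi where "Qi = mat 1 - (lam / (1 + lam)) *\<^sub>R outer v v"
  have Qv: "Q *v x = x + (lam * (v \<bullet> x)) *\<^sub>R v" for x
    by (simp add: Q_def matrix_vector_mult_add_rdistrib scaleR_matrix_vector_assoc[symmetric] outer_mulv)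
  have Qiv: "Qi *v x = x - (lam / (1 + lam) * (v \<bullet> x)) *\<^sub>R v" for x
    by (simp add: Qi_def matrix_vector_mult_diff_rdistrib scaleR_matrix_vector_assoc[symmetric] outer_mulv)
  have l1: "lam - lam / (1 + lam) - lam * (lam / (1 + lam)) = 0" using lam by (simp add: field_simps)
  have "Q *v (Qi *v x) = x" for x
  proof -
    have "Q *v (Qi *v x) = x + ((lam - lam / (1 + lam) - lam * (lam / (1 + lam))) * (v \<bullet> x)) *\<^sub>R v"
      by (simp add: Qv Qiv inner_diff_right vv algebra_simps)
    then show ?thesis using l1 by simp
  qed
  then have QQi: "Q ** Qi = mat 1" by (simp add: matrix_eq matrix_vector_mul_assoc[symmetric])
  have "Qi *v (Q *v x) = x" for x
  proof -
    have "Qi *v (Q *v x) = x + ((lam - lam / (1 + lam) - lam * (lam / (1 + lam))) * (v \<bullet> x)) *\<^sub>R v"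
      by (simp add: Qv Qiv inner_add_right vv algebra_simps)
    then show ?thesis using l1 by simp
  qed
  then have QiQ: "Qi ** Q = mat 1" by (simp add: matrix_eq matrix_vector_mul_assoc[symmetric])
  have "matrix_inv Q = Qi"
    unfolding matrix_inv_def
  proof (rule someI2[of _ Qi])
    show "Q ** Qi = mat 1 \<and> Qi ** Q = mat 1" using QQi QiQ by simp
    fix B assume "Q ** B = mat 1 \<and> B ** Q = mat 1"
    then have BQ: "B ** Q = mat 1" by simp
    have "B = B ** (Q ** Qi)" by (simp add: QQi)
    also have "\<dots> = (B ** Q) ** Qi" by (simp add: matrix_mul_assoc)
    also have "\<dots> = Qi" by (simp add: BQ)
    finally show "B = Qi" .
  qed
  then show ?thesis by (simp add: Q_def Qi_def)
qed

lemma gauss_form: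
  fixes v :: "real^'n::finite"
  assumes vv: "v \<bullet> v = 1" and lam: "lam > 0"
  shows "gauss_density (mat 1 + lam *\<^sub>R outer v v) x
     = ((2 * pi) powr (- real CARD('n) / 2) / sqrt (det (mat 1 + lam *\<^sub>R outer v v)))
       * exp (- (x \<bullet> x - lam / (1 + lam) * (v \<bullet> x)^2) / 2)"
proof -
  have "x \<bullet> (matrix_inv (mat 1 + lam *\<^sub>R outer v v) *v x) = x \<bullet> x - lam / (1 + lam) * (v \<bullet> x)^2"
    by (simp add: Qinv[OF vv lam] matrix_vector_mult_diff_rdistrib scaleR_matrix_vector_assoc[symmetric]
        outer_mulv inner_diff_right power2_eq_square inner_commute)
  then show ?thesis by (simp add: gauss_density_def)
qed

lemma sqnn: "(a::real) \<ge> 0 \<Longrightarrow> p * a * p \<ge> 0"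
  by (metis mult.commute mult.left_commute mult_nonneg_nonneg zero_le_square)

lemma refl_sq:
  fixes u w x :: "real^'n::finite"
  assumes uu: "u \<bullet> u = 1" and h: "u \<bullet> w = 0 \<or> u = w"
  shows "(refl u x \<bullet> w)^2 = (x \<bullet> w)^2"
proof -
  have e: "refl u x \<bullet> w = x \<bullet> w - 2 * (u \<bullet> x) * (u \<bullet> w)" by (simp add: refl_def inner_diff_left)
  show ?thesis using h
  proof
    assume "u \<bullet> w = 0" then show ?thesis by (simp add: e)
  next
    assume uw: "u = w"
    have "refl u x \<bullet> w = - (x \<bullet> w)" unfolding e using uu uw by (simp add: inner_commute)
    then show ?thesis by simp
  qed
qed

context onb begin

lemma DD_scale: "r *\<^sub>R DD a b c = DD (r * a) (r * b) (r * c)"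
  by (simp add: DD_def algebra_simps)

lemma DD_diff: "DD a b c - DD a' b' c' = DD (a - a') (b - b') (c - c')"
  by (simp add: DD_def algebra_simps)

lemma step_mm:
  fixes W :: "real^'n^'n"
  assumes "W ** transpose W = DD a b c"
  shows "(DD p1 p2 p3 ** W) ** transpose (DD p1 p2 p3 ** W) = DD (p1 * a * p1) (p2 * b * p2) (p3 * c * p3)"
proof -
  have "(DD p1 p2 p3 ** W) ** transpose (DD p1 p2 p3 ** W) = DD p1 p2 p3 ** (W ** transpose W) ** DD p1 p2 p3"
    by (simp add: matrix_transpose_mul DD_transpose matrix_mul_assoc)
  also have "\<dots> = DD (p1 * a * p1) (p2 * b * p2) (p3 * c * p3)" by (simp add: assms DD_mult)
  finally show ?thesis .
qed

lemma lin_comb: "W - r *\<^sub>R (DD a b c ** W) = DD (1 - r * a) (1 - r * b) (1 - r * c) ** W"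
  for W :: "real^'n^'n"
proof -
  have "W - r *\<^sub>R (DD a b c ** W) = DD 1 1 1 ** W - (r *\<^sub>R DD a b c) ** W"
    by (simp add: DD_one scalar_matrix_assoc)
  also have "\<dots> = (DD 1 1 1 - r *\<^sub>R DD a b c) ** W" by (simp add: mmult_diff_r)
  also have "\<dots> = DD (1 - r * a) (1 - r * b) (1 - r * c) ** W" by (simp add: DD_scale DD_diff)
  finally show ?thesis .
qed

end

theorem lemma3p1:
  fixes wstar v :: "real ^ 'd" and lam \<sigma> \<eta> \<eta>' :: real
    and W W' :: "nat \<Rightarrow> real ^ 'd ^ 'd"
  assumes "CARD('d) \<ge> 3"
    and "lam > 0"
    and "norm wstar = 1" and "norm v = 1" and "v \<bullet> wstar = 0"
    and "\<eta> > 0" and "\<eta>' > 0"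
    and "\<And>k. W (Suc k) = W k - \<eta> *\<^sub>R
            polar (grad (pop_loss (mat 1 + lam *\<^sub>R outer v v) wstar \<sigma>) (W k))"
    and "\<And>k. W' (Suc k) = W' k - \<eta>' *\<^sub>R
            grad (pop_loss (mat 1 + lam *\<^sub>R outer v v) wstar \<sigma>) (W' k)"
  shows "(W 0 ** transpose (W 0) \<in> inv_family wstar v \<longrightarrow>
            (\<forall>k. W k ** transpose (W k) \<in> inv_family wstar v))
       \<and> (W' 0 ** transpose (W' 0) \<in> inv_family wstar v \<longrightarrow>
            (\<forall>k. W' k ** transpose (W' k) \<in> inv_family wstar v))"
proof -
  note lam = assms(2) and nw = assms(3) and nv = assms(4) and vw = assms(5)
  note SGD = assms(8) and GD = assms(9)
  define Q where "Q = mat 1 + lam *\<^sub>R outer v v"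
  have ww: "wstar \<bullet> wstar = 1" using nw by (simp add: power2_norm_eq_inner[symmetric])
  have vv: "v \<bullet> v = 1" using nv by (simp add: power2_norm_eq_inner[symmetric])
  interpret O: onb wstar v by unfold_locales (simp_all add: ww vv vw)
  define \<kappa> where "\<kappa> = lam / (1 + lam)"
  define c0 where "c0 = (2 * pi) powr (- real CARD('d) / 2) / sqrt (det Q)"
  define g where "g = gauss_density Q"
  have gform: "g x = c0 * exp (- (x \<bullet> x - \<kappa> * (v \<bullet> x)^2) / 2)" for x
    unfolding g_def Q_def c0_def \<kappa>_def by (rule gauss_form[OF vv lam])
  have gfun: "g = (\<lambda>x. c0 * exp (- (x \<bullet> x - \<kappa> * (v \<bullet> x)^2) / 2))" using gform by auto
  have gm: "g \<in> borel_measurable borel" unfolding gfun by measurable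
  have \<kappa>0: "\<kappa> \<ge> 0" and \<kappa>1: "\<kappa> < 1" using lam by (auto simp: \<kappa>_def field_simps)
  define b where "b = (1 - \<kappa>) / 2"
  have bpos: "b > 0" using \<kappa>1 by (simp add: b_def)
  have gb: "g x \<le> \<bar>c0\<bar> * exp (- b * (x \<bullet> x))" for x
  proof -
    have cs: "(v \<bullet> x)^2 \<le> x \<bullet> x" using Cauchy_Schwarz_ineq[of v x] vv by simp
    have "- (x \<bullet> x - \<kappa> * (v \<bullet> x)^2) / 2 \<le> - b * (x \<bullet> x)"
      using mult_left_mono[OF cs \<kappa>0] by (simp add: b_def field_simps)
    then have "exp (- (x \<bullet> x - \<kappa> * (v \<bullet> x)^2) / 2) \<le> exp (- b * (x \<bullet> x))" by simp
    then have "\<bar>c0\<bar> * exp (- (x \<bullet> x - \<kappa> * (v \<bullet> x)^2) / 2) \<le> \<bar>c0\<bar> * exp (- b * (x \<bullet> x))"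
      by (intro mult_left_mono) auto
    moreover have "c0 * exp (- (x \<bullet> x - \<kappa> * (v \<bullet> x)^2) / 2) \<le> \<bar>c0\<bar> * exp (- (x \<bullet> x - \<kappa> * (v \<bullet> x)^2) / 2)"
      by (intro mult_right_mono) auto
    ultimately show ?thesis using gform[of x] by linarith
  qed
  interpret G: gs g "\<bar>c0\<bar>" b wstar \<sigma> by unfold_locales (rule gm, rule gb, rule bpos)
  have pop: "pop_loss Q wstar \<sigma> = (\<lambda>W. G.ell (W ** transpose W))"
  proof
    fix W :: "real^'d^'d"
    show "pop_loss Q wstar \<sigma> W = G.ell (W ** transpose W)"
      unfolding pop_loss_def G.ell_def G.er_def G.Y_def data_measure_dm g_def[symmetric]
      by (simp add: sum_column_sq)
  qed
  have gradf: "grad (pop_loss Q wstar \<sigma>) X = 2 *\<^sub>R (G.Gam (X ** transpose X) ** X)" for X :: "real^'d^'d"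
    unfolding pop by (rule G.P_grad)
  have ginv: "g (refl u x) = g x" if u: "u \<bullet> u = 1" and uv: "u \<bullet> v = 0 \<or> u = v" for u x
  proof -
    have nu: "norm u = 1" using u by (simp add: norm_eq_sqrt_inner)
    have "refl u x \<bullet> refl u x = x \<bullet> x" by (rule refl_refl_inner[OF nu])
    moreover have "(v \<bullet> refl u x)^2 = (v \<bullet> x)^2" using refl_sq[OF u uv, of x] by (simp add: inner_commute)
    ultimately show ?thesis by (simp add: gform)
  qed
  have Gam_DD: "\<exists>\<alpha> \<beta> \<gamma>. G.Gam M = O.DD \<alpha> \<beta> \<gamma>" if M: "M = O.DD a b c" for M a b c
  proof -
    have eig: "G.Gam M *v u = (u \<bullet> (G.Gam M *v u)) *\<^sub>R u"
      if u: "u \<bullet> u = 1" and uw: "u \<bullet> wstar = 0 \<or> u = wstar" and uv: "u \<bullet> v = 0 \<or> u = v" for u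
    proof (rule G.Gam_eig)
      show nu: "norm u = 1" using u by (simp add: norm_eq_sqrt_inner)
      show "g (refl u x) = g x" for x by (rule ginv[OF u uv])
      show "(refl u x \<bullet> wstar)^2 = (x \<bullet> wstar)^2" for x by (rule refl_sq[OF u uw])
      show "qf M (refl u x) = qf M x" for x
      proof -
        have "refl u x \<bullet> refl u x = x \<bullet> x" by (rule refl_refl_inner[OF nu])
        moreover have "(wstar \<bullet> refl u x)^2 = (wstar \<bullet> x)^2" using refl_sq[OF u uw, of x] by (simp add: inner_commute)
        moreover have "(v \<bullet> refl u x)^2 = (v \<bullet> x)^2" using refl_sq[OF u uv, of x] by (simp add: inner_commute)
        ultimately show ?thesis unfolding M by (simp add: O.qf_DD)
      qed
    qed
    have ew: "G.Gam M *v wstar = (wstar \<bullet> (G.Gam M *v wstar)) *\<^sub>R wstar"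
      by (rule eig) (simp_all add: ww O.wv)
    have ev: "G.Gam M *v v = (v \<bullet> (G.Gam M *v v)) *\<^sub>R v"
      by (rule eig) (simp_all add: vv vw)
    have ep: "\<exists>c. G.Gam M *v p = c *\<^sub>R p" if p: "p \<noteq> 0" "wstar \<bullet> p = 0" "v \<bullet> p = 0" for p
    proof -
      define u where "u = (1 / norm p) *\<^sub>R p"
      have np: "norm p > 0" using p by simp
      have uu: "u \<bullet> u = 1" using np by (simp add: u_def power2_norm_eq_inner[symmetric] power2_eq_square)
      have "u \<bullet> wstar = 0" "u \<bullet> v = 0" using p by (simp_all add: u_def inner_commute)
      then have eu: "G.Gam M *v u = (u \<bullet> (G.Gam M *v u)) *\<^sub>R u" using eig[OF uu] by simp
      have pu: "p = norm p *\<^sub>R u" using np by (simp add: u_def)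
      have "G.Gam M *v p = norm p *\<^sub>R (G.Gam M *v u)" by (subst pu) (simp add: matrix_scaleR_vector_ac scaleR_matrix_vector_assoc)
      also have "\<dots> = (u \<bullet> (G.Gam M *v u)) *\<^sub>R (norm p *\<^sub>R u)" by (subst eu) simp
      also have "\<dots> = (u \<bullet> (G.Gam M *v u)) *\<^sub>R p" using pu by simp
      finally show ?thesis by blast
    qed
    obtain \<gamma> where "G.Gam M = O.DD (wstar \<bullet> (G.Gam M *v wstar)) (v \<bullet> (G.Gam M *v v)) \<gamma>"
      using O.DD_structure[OF G.Gam_sym ew ev ep] by blast
    then show ?thesis by blast
  qed
  have fam: "X \<in> inv_family wstar v \<longleftrightarrow> (\<exists>a b c. X = O.DD a b c \<and> a \<ge> 0 \<and> b \<ge> 0 \<and> c \<ge> 0)" for X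
    by (auto simp: inv_family_def O.DD_def)
  have part1: "\<forall>k. W k ** transpose (W k) \<in> inv_family wstar v" if W0: "W 0 ** transpose (W 0) \<in> inv_family wstar v"
  proof
    fix k show "W k ** transpose (W k) \<in> inv_family wstar v"
    proof (induction k)
      case 0 then show ?case by (rule W0)
    next
      case (Suc k)
      then obtain a b c where M: "W k ** transpose (W k) = O.DD a b c" and abc: "a \<ge> 0" "b \<ge> 0" "c \<ge> 0"
        using fam by blast
      obtain \<alpha> \<beta> \<gamma> where Ga: "G.Gam (W k ** transpose (W k)) = O.DD \<alpha> \<beta> \<gamma>" using Gam_DD[OF M] by blast
      define A where "A = O.DD (2 * \<alpha>) (2 * \<beta>) (2 * \<gamma>) ** W k"
      have gA: "grad (pop_loss Q wstar \<sigma>) (W k) = A"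
        unfolding gradf Ga A_def by (simp add: scalar_matrix_assoc O.DD_scale)
      have AA: "A ** transpose A = O.DD ((2 * \<alpha>) * a * (2 * \<alpha>)) ((2 * \<beta>) * b * (2 * \<beta>)) ((2 * \<gamma>) * c * (2 * \<gamma>))"
        unfolding A_def by (rule O.step_mm[OF M])
      have pA: "polar A = O.DD (hf ((2 * \<alpha>) * a * (2 * \<alpha>))) (hf ((2 * \<beta>) * b * (2 * \<beta>))) (hf ((2 * \<gamma>) * c * (2 * \<gamma>))) ** A"
        by (rule O.polar_DD[OF AA]) (rule sqnn, rule abc)+
      define h1 where "h1 = hf ((2 * \<alpha>) * a * (2 * \<alpha>)) * (2 * \<alpha>)"
      define h2 where "h2 = hf ((2 * \<beta>) * b * (2 * \<beta>)) * (2 * \<beta>)"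
      define h3 where "h3 = hf ((2 * \<gamma>) * c * (2 * \<gamma>)) * (2 * \<gamma>)"
      have s1: "W (Suc k) = W k - \<eta> *\<^sub>R polar A" using SGD[of k] gA unfolding Q_def by simp
      have "polar A = O.DD (hf ((2 * \<alpha>) * a * (2 * \<alpha>))) (hf ((2 * \<beta>) * b * (2 * \<beta>))) (hf ((2 * \<gamma>) * c * (2 * \<gamma>))) ** A"
        by (rule pA)
      also have "\<dots> = (O.DD (hf ((2 * \<alpha>) * a * (2 * \<alpha>))) (hf ((2 * \<beta>) * b * (2 * \<beta>))) (hf ((2 * \<gamma>) * c * (2 * \<gamma>)))
                        ** O.DD (2 * \<alpha>) (2 * \<beta>) (2 * \<gamma>)) ** W k"
        unfolding A_def by (rule matrix_mul_assoc)
      also have "\<dots> = O.DD h1 h2 h3 ** W k"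
        by (simp only: O.DD_mult h1_def h2_def h3_def)
      finally have "W (Suc k) = W k - \<eta> *\<^sub>R (O.DD h1 h2 h3 ** W k)" using s1 by simp
      also have "\<dots> = O.DD (1 - \<eta> * h1) (1 - \<eta> * h2) (1 - \<eta> * h3) ** W k" by (rule O.lin_comb)
      finally have Ws: "W (Suc k) = O.DD (1 - \<eta> * h1) (1 - \<eta> * h2) (1 - \<eta> * h3) ** W k" .
      show ?case unfolding fam Ws O.step_mm[OF M] using abc by (blast intro: sqnn)
    qed
  qed
  have part2: "\<forall>k. W' k ** transpose (W' k) \<in> inv_family wstar v" if W0: "W' 0 ** transpose (W' 0) \<in> inv_family wstar v"
  proof
    fix k show "W' k ** transpose (W' k) \<in> inv_family wstar v"
    proof (induction k)
      case 0 then show ?case by (rule W0)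
    next
      case (Suc k)
      then obtain a b c where M: "W' k ** transpose (W' k) = O.DD a b c" and abc: "a \<ge> 0" "b \<ge> 0" "c \<ge> 0"
        using fam by blast
      obtain \<alpha> \<beta> \<gamma> where Ga: "G.Gam (W' k ** transpose (W' k)) = O.DD \<alpha> \<beta> \<gamma>" using Gam_DD[OF M] by blast
      have gA: "grad (pop_loss Q wstar \<sigma>) (W' k) = O.DD (2 * \<alpha>) (2 * \<beta>) (2 * \<gamma>) ** W' k"
        unfolding gradf Ga by (simp add: scalar_matrix_assoc O.DD_scale)
      have Ws: "W' (Suc k) = O.DD (1 - \<eta>' * (2 * \<alpha>)) (1 - \<eta>' * (2 * \<beta>)) (1 - \<eta>' * (2 * \<gamma>)) ** W' k"
        unfolding GD Q_def[symmetric] gA by (rule O.lin_comb)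
      show ?case unfolding fam Ws O.step_mm[OF M] using abc by (blast intro: sqnn)
    qed
  qed
  show ?thesis using part1 part2 by blast
qed

end
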